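(* For every Coxeter system $(W,S)$, the language $\mathcal R(W^{FC})=\bigcup_{w\in W^{FC}}\mathcal R(w)\subseteq S^*$ of all reduced expressions of fully commutative elements is a regular language over the alphabet $S$ (i.e. it is recognized by a finite deterministic automaton).
   Context: Coxeter system $(W,S)$: finite $S$, symmetric $(m_{st})$ with $m_{ss}=1$, $m_{st}\in\{2,3,\dots\}\cup\{\infty\}$ for $s\ne t$, $W=\langle S\mid (st)^{m_{st}}=1,\ m_{st}<\infty\rangle$. $\mathcal R(w)$ is the set of reduced expressions of $w$ (words in $S$ of minimal length representing $w$). $w$ is fully commutative if $\mathcal R(w)$ is a single class for the equivalence on $S^*$ generated by $\mathbf u st\mathbf v\sim\mathbf u ts\mathbf v$ when $m_{st}=2$; $W^{FC}$ is the set of such elements. *)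

theory Defs
  imports Main "HOL-Library.Extended_Nat"
begin

definition coxeter_matrix :: "'a set \<Rightarrow> ('a \<Rightarrow> 'a \<Rightarrow> enat) \<Rightarrow> bool" where
  "coxeter_matrix S m \<longleftrightarrow> finite S \<and> (\<forall>s\<in>S. m s s = 1)
     \<and> (\<forall>s\<in>S. \<forall>t\<in>S. m s t = m t s)
     \<and> (\<forall>s\<in>S. \<forall>t\<in>S. s \<noteq> t \<longrightarrow> m s t \<ge> 2)"

fun alt :: "'a \<Rightarrow> 'a \<Rightarrow> nat \<Rightarrow> 'a list" where
  "alt s t 0 = []"
| "alt s t (Suc n) = s # alt t s n"

text \<open>Two words over S represent the same element of W = <S | (st)^m_st = 1>:
  the congruence on S* generated by the relators (st)^(m_st) (m_st finite);
  since m_ss = 1 this includes ss = 1, so the monoid quotient is the group W.\<close>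
inductive coxeter_eq :: "'a set \<Rightarrow> ('a \<Rightarrow> 'a \<Rightarrow> enat) \<Rightarrow> 'a list \<Rightarrow> 'a list \<Rightarrow> bool"
  for S m where
  refl: "w \<in> lists S \<Longrightarrow> coxeter_eq S m w w"
| sym: "coxeter_eq S m u w \<Longrightarrow> coxeter_eq S m w u"
| trans: "coxeter_eq S m u v \<Longrightarrow> coxeter_eq S m v w \<Longrightarrow> coxeter_eq S m u w"
| rel: "s \<in> S \<Longrightarrow> t \<in> S \<Longrightarrow> m s t = enat k \<Longrightarrow> u \<in> lists S \<Longrightarrow> v \<in> lists S
        \<Longrightarrow> coxeter_eq S m (u @ alt s t (2 * k) @ v) (u @ v)"

definition reduced :: "'a set \<Rightarrow> ('a \<Rightarrow> 'a \<Rightarrow> enat) \<Rightarrow> 'a list \<Rightarrow> bool" where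
  "reduced S m w \<longleftrightarrow> w \<in> lists S \<and> (\<forall>u. coxeter_eq S m u w \<longrightarrow> length w \<le> length u)"

definition comm_step :: "('a \<Rightarrow> 'a \<Rightarrow> enat) \<Rightarrow> 'a list \<Rightarrow> 'a list \<Rightarrow> bool" where
  "comm_step m x y \<longleftrightarrow> (\<exists>u v s t. m s t = 2 \<and> x = u @ [s, t] @ v \<and> y = u @ [t, s] @ v)"

definition comm_eq :: "('a \<Rightarrow> 'a \<Rightarrow> enat) \<Rightarrow> 'a list \<Rightarrow> 'a list \<Rightarrow> bool" where
  "comm_eq m = (comm_step m)\<^sup>*\<^sup>*"

text \<open>R(W^FC): reduced words w whose element has all its reduced expressions
  in one commutation class (the class of w).\<close>
definition FC_reduced_words :: "'a set \<Rightarrow> ('a \<Rightarrow> 'a \<Rightarrow> enat) \<Rightarrow> 'a list set" where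
  "FC_reduced_words S m = {w. reduced S m w \<and>
      (\<forall>u. reduced S m u \<and> coxeter_eq S m u w \<longrightarrow> comm_eq m u w)}"

definition regular_lang :: "'a set \<Rightarrow> 'a list set \<Rightarrow> bool" where
  "regular_lang \<Sigma> L \<longleftrightarrow> (\<exists>(Q :: nat set) q0 (\<delta> :: nat \<Rightarrow> 'a \<Rightarrow> nat) F.
      finite Q \<and> q0 \<in> Q \<and> F \<subseteq> Q \<and> (\<forall>q\<in>Q. \<forall>a\<in>\<Sigma>. \<delta> q a \<in> Q) \<and>
      L = {w \<in> lists \<Sigma>. foldl \<delta> q0 w \<in> F})"

end

theory Submission
  imports Defs Complex_Main
begin


lemma alt_add: "alt s t (a+b) = alt s t a @ (if even a then alt s t b else alt t s b)"
  by (induction a arbitrary: s t) auto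

lemma alt_length[simp]: "length (alt s t n) = n"
  by (induction n arbitrary: s t) auto

lemma rev_alt: "rev (alt t s k) = (if even k then alt s t k else alt t s k)"
proof (induction k arbitrary: s t)
  case 0 then show ?case by simp
next
  case (Suc k)
  have "alt t s (Suc k) = alt t s k @ (if even k then [t] else [s])"
    using alt_add[of t s k 1] by simp
  then show ?case using Suc[of s t] Suc[of t s] by (auto simp: alt_add[of _ _ 1 k, simplified])
qed

lemma alt_double: "alt s t (2*k) = alt s t k @ rev (alt t s k)"
  using alt_add[of s t k k] by (simp add: rev_alt mult_2)

lemma rev_lists[simp]: "rev x \<in> lists A \<longleftrightarrow> x \<in> lists A" by auto

lemma set_alt: "set (alt s t n) \<subseteq> {s,t}"
  by (induction n arbitrary: s t) auto

locale cox =
  fixes S :: "'a set" and m :: "'a \<Rightarrow> 'a \<Rightarrow> enat"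
  assumes cm: "coxeter_matrix S m"
begin

abbreviation ceq where "ceq \<equiv> coxeter_eq S m"

lemma finS: "finite S" using cm unfolding coxeter_matrix_def by auto
lemma mss: "s \<in> S \<Longrightarrow> m s s = 1" using cm unfolding coxeter_matrix_def by auto
lemma msym: "s \<in> S \<Longrightarrow> t \<in> S \<Longrightarrow> m s t = m t s" using cm unfolding coxeter_matrix_def by auto
lemma mge2: "s \<in> S \<Longrightarrow> t \<in> S \<Longrightarrow> s \<noteq> t \<Longrightarrow> m s t \<ge> 2" using cm unfolding coxeter_matrix_def by auto

lemma ceq_lists: "ceq u w \<Longrightarrow> u \<in> lists S \<and> w \<in> lists S"
  by (induction rule: coxeter_eq.induct) (auto dest: set_alt[THEN subsetD])

lemma ceq_refl: "w \<in> lists S \<Longrightarrow> ceq w w" by (rule coxeter_eq.refl)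
lemma ceq_sym: "ceq u w \<Longrightarrow> ceq w u" by (rule coxeter_eq.sym)
lemma ceq_trans: "ceq u v \<Longrightarrow> ceq v w \<Longrightarrow> ceq u w" by (rule coxeter_eq.trans)

lemma ceq_cong: "ceq u w \<Longrightarrow> p \<in> lists S \<Longrightarrow> q \<in> lists S \<Longrightarrow> ceq (p@u@q) (p@w@q)"
proof (induction rule: coxeter_eq.induct)
  case (refl w) then show ?case by (intro ceq_refl) auto
next
  case (sym u w) then show ?case by (auto intro: ceq_sym)
next
  case (trans u v w) then show ?case by (blast intro: ceq_trans)
next
  case (rel s t k u v)
  from coxeter_eq.rel[where S=S and m=m and s=s and t=t and k=k and u="p@u" and v="v@q"] rel show ?case by simp
qed

lemma ceq_congL: "ceq u w \<Longrightarrow> p \<in> lists S \<Longrightarrow> ceq (p@u) (p@w)"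
  using ceq_cong[of u w p "[]"] by simp
lemma ceq_congR: "ceq u w \<Longrightarrow> q \<in> lists S \<Longrightarrow> ceq (u@q) (w@q)"
  using ceq_cong[of u w "[]" q] by simp

lemma ceq_app: "ceq u u' \<Longrightarrow> ceq w w' \<Longrightarrow> ceq (u@w) (u'@w')"
  by (meson ceq_congL ceq_congR ceq_lists ceq_trans)

lemma ceq_ss: "s \<in> S \<Longrightarrow> ceq [s,s] []"
  using coxeter_eq.rel[where s=s and t=s and k=1 and u="[]" and v="[]"] by (simp add: mss one_enat_def numeral_2_eq_2)

lemma ceq_rev_app: "x \<in> lists S \<Longrightarrow> ceq (rev x @ x) []"
proof (induction x)
  case Nil then show ?case by (simp add: ceq_refl)
next
  case (Cons a x)
  have "ceq (rev x @ ([a,a]) @ x) (rev x @ [] @ x)"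
    using Cons by (intro ceq_cong ceq_ss) auto
  then show ?case using Cons by (auto intro: ceq_trans)
qed

lemma ceq_app_rev: "x \<in> lists S \<Longrightarrow> ceq (x @ rev x) []"
  using ceq_rev_app[of "rev x"] by (simp add: set_rev)

lemma ceq_cancelL: "ceq (p@u) (p@w) \<Longrightarrow> p \<in> lists S \<Longrightarrow> ceq u w"
proof -
  assume a: "ceq (p@u) (p@w)" and p: "p \<in> lists S"
  have uw: "u \<in> lists S" "w \<in> lists S" using ceq_lists[OF a] by auto
  have "ceq (rev p @ (p@u)) (rev p @ (p@w))" using ceq_congL[OF a, of "rev p"] p by simp
  moreover have "ceq ((rev p @ p) @ u) ([] @ u)" using ceq_congR[OF ceq_rev_app[OF p] uw(1)] .
  moreover have "ceq ((rev p @ p) @ w) ([] @ w)" using ceq_congR[OF ceq_rev_app[OF p] uw(2)] .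
  ultimately show ?thesis by (metis append.assoc append_Nil ceq_sym ceq_trans)
qed

lemma ceq_cancelR: "ceq (u@p) (w@p) \<Longrightarrow> p \<in> lists S \<Longrightarrow> ceq u w"
proof -
  assume a: "ceq (u@p) (w@p)" and p: "p \<in> lists S"
  have uw: "u \<in> lists S" "w \<in> lists S" using ceq_lists[OF a] by auto
  have "ceq ((u@p) @ rev p) ((w@p) @ rev p)" using ceq_congR[OF a, of "rev p"] p by simp
  moreover have "ceq (u @ (p @ rev p)) (u @ [])" using ceq_congL[OF ceq_app_rev[OF p] uw(1)] .
  moreover have "ceq (w @ (p @ rev p)) (w @ [])" using ceq_congL[OF ceq_app_rev[OF p] uw(2)] .
  ultimately show ?thesis by (metis append.assoc append_Nil2 ceq_sym ceq_trans)
qed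

lemma alt_lists: "s \<in> S \<Longrightarrow> t \<in> S \<Longrightarrow> alt s t n \<in> lists S"
  using set_alt[of s t n] by auto

lemma ceq_alt_rel: "s \<in> S \<Longrightarrow> t \<in> S \<Longrightarrow> m s t = enat k \<Longrightarrow> ceq (alt s t (2*k)) []"
  using coxeter_eq.rel[where s=s and t=t and k=k and u="[]" and v="[]"] by simp

lemma ceq_braid: "s \<in> S \<Longrightarrow> t \<in> S \<Longrightarrow> m s t = enat k \<Longrightarrow> ceq (alt s t k) (alt t s k)"
proof -
  assume st: "s \<in> S" "t \<in> S" and mk: "m s t = enat k"
  let ?A = "alt s t k" and ?B = "alt t s k"
  have B: "?B \<in> lists S" using alt_lists st by auto
  have A: "?A \<in> lists S" using alt_lists st by auto
  have "ceq (?A @ (rev ?B @ ?B)) (?A @ [])" using ceq_congL[OF ceq_rev_app[OF B] A] .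
  moreover have "ceq ((?A @ rev ?B) @ ?B) ([] @ ?B)"
    using ceq_congR[OF ceq_alt_rel[OF st mk] B] by (simp add: alt_double)
  ultimately show ?thesis by (metis append.assoc append_Nil append_Nil2 ceq_sym ceq_trans)
qed

end


lemma sum_split_add: "(\<Sum>i<a+b. f i) = (\<Sum>i<a. f i) + (\<Sum>j<b. f (a+j)::nat)" for a b :: nat
  by (induction b) (auto simp: add.assoc)

lemma take_alt: "i \<le> n \<Longrightarrow> take i (alt s t n) = alt s t i"
  using alt_add[of s t i "n-i"] by simp

lemma nth_alt: "i < n \<Longrightarrow> alt s t n ! i = (if even i then s else t)"
proof (induction n arbitrary: i s t)
  case 0 then show ?case by simp
next
  case (Suc n) then show ?case by (cases i) auto
qed

lemma alt_odd_mid: "alt s t i @ [if even i then s else t] @ rev (alt s t i) = alt s t (2*i+1)"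
proof -
  have e: "2*i+1 = i + Suc i" by simp
  have "alt s t (i + Suc i) = alt s t i @ (if even i then alt s t (Suc i) else alt t s (Suc i))" by (rule alt_add)
  then show ?thesis unfolding e using rev_alt[of s t i] rev_alt[of t s i] by auto
qed

context cox begin

definition tr :: "'a list \<Rightarrow> nat \<Rightarrow> 'a list" where
  "tr w i = take i w @ [w!i] @ rev (take i w)"

definition cnt :: "'a list \<Rightarrow> 'a list \<Rightarrow> nat" where
  "cnt w r = (\<Sum>i<length w. if ceq (tr w i) r then 1 else 0)"

lemma tr_alt: "i < n \<Longrightarrow> tr (alt s t n) i = alt s t (2*i+1)"
  unfolding tr_def take_alt[OF less_imp_le] nth_alt by (rule alt_odd_mid)

lemma tr_app1: "i < length x \<Longrightarrow> tr (x@y) i = tr x i"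
  unfolding tr_def by (simp add: nth_append)

lemma tr_app2: "tr (x@y) (length x + j) = x @ tr y j @ rev x"
  unfolding tr_def by (simp add: nth_append)

lemma tr_lists: "w \<in> lists S \<Longrightarrow> i < length w \<Longrightarrow> tr w i \<in> lists S"
  unfolding tr_def by (auto dest: in_set_takeD)

lemma conj_iff: "x \<in> lists S \<Longrightarrow> ceq (x@T@rev x) r \<longleftrightarrow> ceq T (rev x @ r @ x)"
proof
  assume x: "x \<in> lists S" and h: "ceq (x@T@rev x) r"
  have T: "T \<in> lists S" using ceq_lists[OF h] by auto
  have "ceq (rev x @ (x@T@rev x) @ x) (rev x @ r @ x)" using ceq_cong[OF h] x by simp
  moreover have "ceq ((rev x @ x) @ (T @ (rev x @ x))) ([] @ (T @ []))"
    using ceq_app[OF ceq_rev_app[OF x] ceq_app[OF ceq_refl[OF T] ceq_rev_app[OF x]]] .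
  ultimately show "ceq T (rev x @ r @ x)" by (metis append.assoc append_Nil append_Nil2 ceq_sym ceq_trans)
next
  assume x: "x \<in> lists S" and h: "ceq T (rev x @ r @ x)"
  have r: "r \<in> lists S" using ceq_lists[OF h] by auto
  have "ceq (x@T@rev x) (x @ (rev x @ r @ x) @ rev x)" using ceq_cong[OF h] x by simp
  moreover have "ceq ((x @ rev x) @ (r @ (x @ rev x))) ([] @ (r @ []))"
    using ceq_app[OF ceq_app_rev[OF x] ceq_app[OF ceq_refl[OF r] ceq_app_rev[OF x]]] .
  ultimately show "ceq (x@T@rev x) r" by (metis append.assoc append_Nil append_Nil2 ceq_sym ceq_trans)
qed

lemma cnt_app: "cnt (x@y) r = cnt x r + cnt y (rev x @ r @ x)"
proof (cases "x \<in> lists S")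
  case True
  have "cnt (x@y) r = (\<Sum>i<length x + length y. if ceq (tr (x@y) i) r then 1 else 0)"
    unfolding cnt_def by simp
  also have "\<dots> = cnt x r + cnt y (rev x @ r @ x)"
    unfolding sum_split_add cnt_def
    by (simp add: tr_app1 tr_app2 conj_iff[OF True])
  finally show ?thesis .
next
  case False
  have "\<And>T. \<not> ceq (x@T@rev x) r" using False ceq_lists by fastforce
  moreover have "\<And>T. \<not> ceq T (rev x @ r @ x)" using False ceq_lists by fastforce
  ultimately show ?thesis unfolding cnt_def sum_split_add length_append
    by (simp add: tr_app1 tr_app2)
qed

lemma cnt_cong: "ceq r r' \<Longrightarrow> cnt w r = cnt w r'"
  unfolding cnt_def by (meson ceq_sym ceq_trans)

lemma cnt_nl: "r \<notin> lists S \<Longrightarrow> cnt w r = 0"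
  unfolding cnt_def using ceq_lists by auto

lemma cnt_alt_even: assumes st: "s \<in> S" "t \<in> S" and mk: "m s t = enat k"
  shows "even (cnt (alt s t (2*k)) r)"
proof -
  define f where "f i = (if ceq (alt s t (2*i+1)) r then 1 else 0::nat)" for i
  have per: "f (k+j) = f j" for j
  proof -
    have "alt s t (2*(k+j)+1) = alt s t (2*k) @ alt s t (2*j+1)"
      using alt_add[of s t "2*k" "2*j+1"] by (simp add: algebra_simps)
    moreover have "ceq (alt s t (2*k) @ alt s t (2*j+1)) ([] @ alt s t (2*j+1))"
      by (rule ceq_congR[OF ceq_alt_rel[OF st mk]]) (use alt_lists st in auto)
    ultimately show ?thesis unfolding f_def by (metis append_Nil ceq_sym ceq_trans)
  qed
  have "cnt (alt s t (2*k)) r = (\<Sum>i<k+k. f i)"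
    unfolding cnt_def f_def by (intro sum.cong) (auto simp: tr_alt)
  also have "\<dots> = 2 * (\<Sum>i<k. f i)" unfolding sum_split_add per by simp
  finally show ?thesis by simp
qed

lemma parity: "ceq u w \<Longrightarrow> odd (cnt u r) \<longleftrightarrow> odd (cnt w r)"
proof (induction arbitrary: r rule: coxeter_eq.induct)
  case (rel s t k u v)
  let ?A = "alt s t (2*k)"
  define r1 where "r1 = rev u @ r @ u"
  have "cnt (u @ ?A @ v) r = cnt u r + cnt ?A r1 + cnt v (rev ?A @ r1 @ ?A)"
    unfolding cnt_app r1_def by simp
  moreover have "cnt (u@v) r = cnt u r + cnt v r1" unfolding cnt_app r1_def by simp
  moreover have "cnt v (rev ?A @ r1 @ ?A) = cnt v r1"
  proof (cases "r1 \<in> lists S")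
    case True
    have "rev ?A = alt t s (2*k)" using rev_alt[of s t "2*k"] by simp
    then have rA: "ceq (rev ?A) []" using ceq_alt_rel[of t s k] rel msym by auto
    have "ceq (rev ?A @ r1 @ ?A) ([] @ r1 @ [])"
      using ceq_app[OF rA ceq_app[OF ceq_refl[OF True] ceq_alt_rel[OF rel(1-3)]]] .
    then show ?thesis using cnt_cong by simp
  next
    case False
    then have "rev ?A @ r1 @ ?A \<notin> lists S" by auto
    then show ?thesis using False cnt_nl by simp
  qed
  moreover have "even (cnt ?A r1)" using cnt_alt_even rel by blast
  ultimately show ?case by simp
qed auto

end


definition del :: "'a list \<Rightarrow> nat \<Rightarrow> 'a list" where
  "del w i = take i w @ drop (Suc i) w"

lemma del_length: "i < length w \<Longrightarrow> length (del w i) = length w - 1"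
  unfolding del_def by simp

lemma del_set: "set (del w i) \<subseteq> set w"
  unfolding del_def using set_take_subset set_drop_subset by fastforce

lemma del_app: "del (a@z) i = (if i < length a then del a i @ z else a @ del z (i - length a))"
proof (cases "i < length a")
  case True then show ?thesis unfolding del_def by simp
next
  case False
  then have "Suc i - length a = Suc (i - length a)" by simp
  with False show ?thesis unfolding del_def by simp
qed
context cox begin

lemma del_lists: "w \<in> lists S \<Longrightarrow> del w i \<in> lists S"
  using del_set[of w i] by (simp add: in_lists_conv_set subset_iff)

lemma D1_gen: assumes P: "P \<in> lists S" and Q: "Q \<in> lists S" and a: "a \<in> S"
  shows "ceq ((P@[a]@rev P) @ P @ [a] @ Q) (P @ Q)"
proof -
  have h1: "ceq ((P @ [a]) @ (rev P @ P) @ ([a] @ Q)) ((P @ [a]) @ [] @ ([a] @ Q))"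
    by (rule ceq_cong[OF ceq_rev_app[OF P]]) (use P Q a in auto)
  have h2: "ceq (P @ [a,a] @ Q) (P @ [] @ Q)" by (rule ceq_cong[OF ceq_ss[OF a] P Q])
  have h3: "ceq ((P@[a]@rev P) @ P @ [a] @ Q) (P @ [a,a] @ Q)" using h1 by simp
  show ?thesis using ceq_trans[OF h3] h2 by simp
qed

lemma D1: assumes w: "w \<in> lists S" and i: "i < length w"
  shows "ceq (tr w i @ w) (del w i)"
proof -
  have wd: "w = take i w @ [w!i] @ drop (Suc i) w" using id_take_nth_drop[OF i] by simp
  have a: "w!i \<in> S" using w i by auto
  have P: "take i w \<in> lists S" and Q: "drop (Suc i) w \<in> lists S" using w by (auto dest: in_set_takeD in_set_dropD)
  have "ceq (tr w i @ (take i w @ [w!i] @ drop (Suc i) w)) (del w i)"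
    unfolding tr_def del_def by (rule D1_gen[OF P Q a])
  then show ?thesis using wd by metis
qed

lemma D1': assumes w: "w \<in> lists S" and i: "i < length w"
  shows "ceq w (tr w i @ del w i)"
proof -
  have T: "tr w i \<in> lists S" using tr_lists w i by auto
  have "ceq (tr w i @ (tr w i @ w)) (tr w i @ del w i)" using ceq_congL[OF D1[OF w i] T] .
  moreover have "tr w i @ tr w i @ w = (tr w i @ rev (tr w i)) @ w" unfolding tr_def by simp
  moreover have "ceq ((tr w i @ rev (tr w i)) @ w) ([] @ w)" using ceq_congR[OF ceq_app_rev[OF T] w] .
  ultimately show ?thesis by (metis append_Nil ceq_sym ceq_trans)
qed

lemma tr_del: "i < j \<Longrightarrow> j < length w \<Longrightarrow> tr (del w j) i = tr w i"
  unfolding tr_def del_def by (simp add: nth_append min_def)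

lemma D2: assumes w: "w \<in> lists S" and ij: "i < j" "j < length w" and e: "ceq (tr w i) (tr w j)"
  shows "ceq w (del (del w j) i)"
proof -
  have "ceq w (tr w j @ del w j)" using D1' w ij by auto
  moreover have "ceq (tr w j @ del w j) (tr w i @ del w j)"
    using ceq_congR[OF ceq_sym[OF e]] del_lists[OF w] by auto
  moreover have "ceq (tr (del w j) i @ del w j) (del (del w j) i)"
    using D1[OF del_lists[OF w]] ij del_length[of j w] by auto
  ultimately show ?thesis using tr_del[OF ij] by (metis ceq_trans)
qed

lemma reduced_lists: "reduced S m w \<Longrightarrow> w \<in> lists S" unfolding reduced_def by auto

lemma reduced_len_eq: "reduced S m u \<Longrightarrow> reduced S m w \<Longrightarrow> ceq u w \<Longrightarrow> length u = length w"
  unfolding reduced_def by (meson ceq_sym le_antisym)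

lemma reduced_distinct: assumes r: "reduced S m w" and ij: "i < j" "j < length w"
  shows "\<not> ceq (tr w i) (tr w j)"
proof
  assume "ceq (tr w i) (tr w j)"
  then have "ceq w (del (del w j) i)" using D2 r ij reduced_lists by blast
  moreover have "length (del (del w j) i) < length w" using ij by (simp add: del_length)
  ultimately show False using r unfolding reduced_def by (meson ceq_sym not_le)
qed

lemma cnt_one: assumes r: "reduced S m w" and i: "i < length w"
  shows "cnt w (tr w i) = 1"
proof -
  have w: "w \<in> lists S" using reduced_lists r by auto
  have "{j \<in> {..<length w}. ceq (tr w j) (tr w i)} = {i}"
  proof -
    have "j = i" if "j < length w" "ceq (tr w j) (tr w i)" for j
      using reduced_distinct[OF r, of i j] reduced_distinct[OF r, of j i] that i ceq_sym
      by (metis linorder_neqE_nat)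
    then show ?thesis using i ceq_refl[OF tr_lists[OF w i]] by auto
  qed
  then have "{..<length w} \<inter> {j. ceq (tr w j) (tr w i)} = {i}" by auto
    then show ?thesis unfolding cnt_def by (simp add: sum.If_cases)
qed

lemma cnt_pos: "cnt w r \<noteq> 0 \<Longrightarrow> \<exists>j<length w. ceq (tr w j) r"
proof (rule ccontr)
  assume "cnt w r \<noteq> 0" "\<not> (\<exists>j<length w. ceq (tr w j) r)"
  then show False unfolding cnt_def by (simp add: sum.neutral)
qed

lemma desc_transfer: assumes r: "reduced S m x" and e: "ceq x x'" and i: "i < length x"
  and t: "ceq (tr x i) q"
  shows "\<exists>j<length x'. ceq (tr x' j) q"
proof -
  have "cnt x q = 1" using cnt_one[OF r i] cnt_cong[OF t] by simp
  then have "odd (cnt x q)" by simp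
  then have "odd (cnt x' q)" using parity[OF e] by blast
  then show ?thesis using cnt_pos by (metis odd_pos neq0_conv)
qed

lemma distinct_reduced: assumes w: "w \<in> lists S"
  and d: "\<And>i j. i < j \<Longrightarrow> j < length w \<Longrightarrow> \<not> ceq (tr w i) (tr w j)"
  shows "reduced S m w"
  unfolding reduced_def
proof (intro conjI allI impI w)
  fix u assume e: "ceq u w"
  have ex: "\<exists>j<length u. ceq (tr u j) (tr w i)" if i: "i < length w" for i
  proof -
    have "cnt w (tr w i) = 1"
    proof -
      have "{j \<in> {..<length w}. ceq (tr w j) (tr w i)} = {i}"
      proof -
        have "j = i" if "j < length w" "ceq (tr w j) (tr w i)" for j
          using d[of i j] d[of j i] that i ceq_sym by (metis linorder_neqE_nat)
        then show ?thesis using i ceq_refl[OF tr_lists[OF w i]] by auto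
      qed
      then have "{..<length w} \<inter> {j. ceq (tr w j) (tr w i)} = {i}" by auto
    then show ?thesis unfolding cnt_def by (simp add: sum.If_cases)
    qed
    then have "odd (cnt u (tr w i))" using parity[OF e] by simp
    then show ?thesis using cnt_pos by (metis odd_pos neq0_conv)
  qed
  define f where "f i = (SOME j. j < length u \<and> ceq (tr u j) (tr w i))" for i
  have f: "f i < length u \<and> ceq (tr u (f i)) (tr w i)" if "i < length w" for i
    unfolding f_def using someI_ex[OF ex[OF that]] .
  have "inj_on f {..<length w}"
  proof (rule inj_onI)
    fix i i' assume "i \<in> {..<length w}" "i' \<in> {..<length w}" "f i = f i'"
    then have "ceq (tr w i) (tr w i')"
      using f[of i] f[of i'] ceq_sym ceq_trans unfolding lessThan_iff by metis
    then show "i = i'" using d[of i i'] d[of i' i] \<open>i \<in> _\<close> \<open>i' \<in> _\<close> ceq_sym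
      unfolding lessThan_iff by (metis linorder_neqE_nat)
  qed
  moreover have "f ` {..<length w} \<subseteq> {..<length u}" using f by auto
  ultimately have "card {..<length w} \<le> card {..<length u}"
    by (intro card_inj_on_le) auto
  then show "length w \<le> length u" by simp
qed

lemma reduced_iff: "reduced S m w \<longleftrightarrow> w \<in> lists S \<and> (\<forall>i j. i < j \<longrightarrow> j < length w \<longrightarrow> \<not> ceq (tr w i) (tr w j))"
  using distinct_reduced reduced_distinct reduced_lists by blast

lemma reduced_sameclass: "reduced S m u \<Longrightarrow> ceq u w \<Longrightarrow> length w = length u \<Longrightarrow> reduced S m w"
  unfolding reduced_def by (metis ceq_lists ceq_sym ceq_trans)

lemma reduced_suffix: assumes "reduced S m (u@w)" shows "reduced S m w"
  unfolding reduced_def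
proof (intro conjI allI impI)
  show "w \<in> lists S" using reduced_lists[OF assms] by simp
  fix v assume "ceq v w"
  then have "ceq (u@v) (u@w)" using ceq_congL reduced_lists[OF assms] by simp
  then show "length w \<le> length v" using assms unfolding reduced_def by fastforce
qed

lemma reduced_prefix: assumes "reduced S m (u@w)" shows "reduced S m u"
  unfolding reduced_def
proof (intro conjI allI impI)
  show "u \<in> lists S" using reduced_lists[OF assms] by simp
  fix v assume "ceq v u"
  then have "ceq (v@w) (u@w)" using ceq_congR reduced_lists[OF assms] by simp
  then show "length u \<le> length v" using assms unfolding reduced_def by fastforce
qed

lemma reduced_Nil: "reduced S m []" unfolding reduced_def by auto

end


lemma trig1: fixes p q x :: real assumes "p + q = 1 \<or> p + q = -1"
  shows "sin (p*x) + 2 * cos x * sin (q*x) = sin ((p+2*q)*x)"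
proof (cases "p + q = 1")
  case True
  then have p: "p = 1 - q" by simp
  show ?thesis unfolding p by (simp add: algebra_simps sin_add sin_diff left_diff_distrib)
next
  case False
  then have p: "p = -1 - q" using assms by simp
  show ?thesis unfolding p by (simp add: algebra_simps sin_add sin_diff left_diff_distrib)
qed

lemma trig2: fixes p q x :: real assumes "p - q = 1 \<or> p - q = -1"
  shows "2 * cos x * sin (p*x) - sin (q*x) = sin ((2*p-q)*x)"
  using trig1[of "-q" p x] assms by (simp add: algebra_simps)

definition Mf :: "real \<Rightarrow> real \<times> real \<Rightarrow> real \<times> real" where
  "Mf c z = (-(fst z + 2*c*snd z), -snd z + 2*c*(fst z + 2*c*snd z))"

lemma Mf_lin: "(Mf c ^^ j) (a*x1 + b*x2, a*y1 + b*y2) =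
   (a * fst ((Mf c ^^ j) (x1,y1)) + b * fst ((Mf c ^^ j) (x2,y2)),
    a * snd ((Mf c ^^ j) (x1,y1)) + b * snd ((Mf c ^^ j) (x2,y2)))"
proof (induction j)
  case 0 then show ?case by simp
next
  case (Suc j) then show ?case by (simp add: Mf_def algebra_simps)
qed

lemma Mf_sv: fixes p q th :: real assumes "p + q = 1 \<or> p + q = -1"
  shows "Mf (cos th) (sin (p*th), sin (q*th)) = (sin ((-p-2*q)*th), sin ((2*p+3*q)*th))"
proof -
  have 1: "sin (p*th) + 2 * cos th * sin (q*th) = sin ((p+2*q)*th)" using trig1 assms by blast
  have 2: "sin ((-q)*th) + 2 * cos th * sin ((p+2*q)*th) = sin ((-q+2*(p+2*q))*th)"
    using trig1[of "-q" "p+2*q" th] assms by auto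
  have e: "(-p-2*q)*th = -((p+2*q)*th)" by (simp add: algebra_simps)
  have a: "sin ((-p-2*q)*th) = - sin ((p+2*q)*th)" unfolding e sin_minus ..
  have e2: "(-q+2*(p+2*q)) = 2*p+3*q" by simp
  have b: "- sin (q*th) + 2 * cos th * sin ((p+2*q)*th) = sin ((2*p+3*q)*th)"
    using 2 unfolding e2 by simp
  have "Mf (cos th) (sin (p*th), sin (q*th)) = (- sin ((p+2*q)*th), sin ((2*p+3*q)*th))"
    unfolding Mf_def fst_conv snd_conv 1 b ..
  then show ?thesis using a by simp
qed

lemma Mf_iter1: "(Mf (cos th) ^^ j) (sin th, 0) = (sin ((1 - 2*real j)*th), sin ((2*real j)*th))"
proof (induction j)
  case 0 then show ?case by simp
next
  case (Suc j)
  have "(Mf (cos th) ^^ Suc j) (sin th, 0) = Mf (cos th) (sin ((1 - 2*real j)*th), sin ((2*real j)*th))"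
    using Suc by simp
  also have "\<dots> = (sin ((-(1 - 2*real j)-2*(2*real j))*th), sin ((2*(1 - 2*real j)+3*(2*real j))*th))"
    by (rule Mf_sv) simp
  finally show ?case by (simp add: algebra_simps)
qed

lemma Mf_iter2: "(Mf (cos th) ^^ j) (0, sin th) = (sin ((- 2*real j)*th), sin ((2*real j + 1)*th))"
proof (induction j)
  case 0 then show ?case by simp
next
  case (Suc j)
  have "(Mf (cos th) ^^ Suc j) (0, sin th) = Mf (cos th) (sin ((- 2*real j)*th), sin ((2*real j + 1)*th))"
    using Suc by simp
  also have "\<dots> = (sin ((-(- 2*real j)-2*(2*real j + 1))*th), sin ((2*(- 2*real j)+3*(2*real j + 1))*th))"
    by (rule Mf_sv) simp
  finally show ?case by (simp add: algebra_simps)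
qed

lemma Mf_pow_id: assumes k: "k \<ge> 2" shows "(Mf (cos (pi / real k)) ^^ k) z = z"
proof -
  define th where "th = pi / real k"
  have kth: "real k * th = pi" unfolding th_def using k by simp
  have sth: "sin th > 0" unfolding th_def using k by (intro sin_gt_zero) (auto simp: field_simps)
  have e1: "(1 - 2*real k)*th = th - 2*pi" using kth by (simp add: algebra_simps)
  have e2: "(2*real k)*th = 2*pi" using kth by (simp add: algebra_simps)
  have e3: "(- 2*real k)*th = -(2*pi)" using kth by (simp add: algebra_simps)
  have e4: "(2*real k + 1)*th = th + 2*pi" using kth by (simp add: algebra_simps)
  have i1: "(Mf (cos th) ^^ k) (sin th, 0) = (sin th, 0)"
    unfolding Mf_iter1 e1 e2 by (simp add: sin_diff)
  have i2: "(Mf (cos th) ^^ k) (0, sin th) = (0, sin th)"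
    unfolding Mf_iter2 e3 e4 by (simp add: sin_add)
  obtain x y where z: "z = (x,y)" by force
  have "z = ((x / sin th) * sin th + (y / sin th) * 0, (x / sin th) * 0 + (y / sin th) * sin th)"
    using sth z by simp
  then have "(Mf (cos th) ^^ k) z = ((x / sin th) * sin th + (y / sin th) * 0, (x / sin th) * 0 + (y / sin th) * sin th)"
    by (metis Mf_lin i1 i2 fst_conv snd_conv)
  then show ?thesis using sth z th_def by simp
qed

definition Nf :: "real \<Rightarrow> real \<times> real \<Rightarrow> real \<times> real" where
  "Nf c z = (2*c*(2*c*fst z - snd z) - fst z, 2*c*fst z - snd z)"

lemma Nf_inf: "(Nf 1 ^^ j) (1,0) = (2*real j + 1, 2*real j)"
  by (induction j) (auto simp: Nf_def algebra_simps)

lemma Nf_fin: assumes "sin th \<noteq> 0"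
  shows "(Nf (cos th) ^^ j) (1,0) = (sin ((2*real j+1)*th) / sin th, sin ((2*real j)*th) / sin th)"
proof (induction j)
  case 0 then show ?case using assms by simp
next
  case (Suc j)
  have a: "2 * cos th * sin ((2*real j+1)*th) - sin ((2*real j)*th) = sin ((2*(2*real j+1) - 2*real j)*th)"
    by (rule trig2) simp
  have b: "2 * cos th * sin ((2*real j+2)*th) - sin ((2*real j+1)*th) = sin ((2*(2*real j+2) - (2*real j+1))*th)"
    by (rule trig2) simp
  have a': "2 * cos th * sin ((2*real j+1)*th) - sin ((2*real j)*th) = sin ((2*real j+2)*th)"
    using a by (simp add: algebra_simps)
  have b': "2 * cos th * sin ((2*real j+2)*th) - sin ((2*real j+1)*th) = sin ((2*real j+3)*th)"
    using b by (simp add: algebra_simps)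
  let ?s = "sin th"
  have "2 * cos th * (sin ((2*real j+1)*th) / ?s) - sin ((2*real j)*th) / ?s = sin ((2*real j+2)*th) / ?s"
    using a' by (metis diff_divide_distrib times_divide_eq_right)
  moreover have "2 * cos th * (sin ((2*real j+2)*th) / ?s) - sin ((2*real j+1)*th) / ?s = sin ((2*real j+3)*th) / ?s"
    using b' by (metis diff_divide_distrib times_divide_eq_right)
  moreover have "2*real (Suc j) + 1 = 2*real j+3" "2*real (Suc j) = 2*real j+2" by simp_all
  ultimately show ?case using Suc by (simp only: funpow.simps o_apply Nf_def fst_conv snd_conv)
qed


context cox begin

definition Bf :: "'a \<Rightarrow> 'a \<Rightarrow> real" where
  "Bf u v = (case m u v of enat k \<Rightarrow> - cos (pi / real k) | \<infinity> \<Rightarrow> -1)"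

definition ind :: "'a \<Rightarrow> 'a \<Rightarrow> real" where
  "ind u x = (if x = u then 1 else 0)"

definition bil :: "'a \<Rightarrow> ('a \<Rightarrow> real) \<Rightarrow> real" where
  "bil u f = (\<Sum>w\<in>S. Bf u w * f w)"

definition sig :: "'a \<Rightarrow> ('a \<Rightarrow> real) \<Rightarrow> ('a \<Rightarrow> real)" where
  "sig u f = (\<lambda>x. f x + (- 2 * bil u f) * ind u x)"

fun act :: "'a list \<Rightarrow> ('a \<Rightarrow> real) \<Rightarrow> ('a \<Rightarrow> real)" where
  "act [] f = f"
| "act (a#w) f = sig a (act w f)"

lemma act_app: "act (u@v) f = act u (act v f)"
  by (induction u) auto

lemma Bf_self: "u \<in> S \<Longrightarrow> Bf u u = 1"
  unfolding Bf_def using mss by (simp add: one_enat_def)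

lemma Bf_sym: "u \<in> S \<Longrightarrow> v \<in> S \<Longrightarrow> Bf u v = Bf v u"
  unfolding Bf_def using msym by simp

lemma bil_lin: assumes v: "v \<in> S"
  shows "bil u (\<lambda>x. f x + a * ind v x) = bil u f + a * Bf u v"
proof -
  have "bil u (\<lambda>x. f x + a * ind v x) = bil u f + a * (\<Sum>w\<in>S. Bf u w * ind v w)"
    unfolding bil_def by (simp add: algebra_simps sum.distrib sum_distrib_left)
  also have "(\<Sum>w\<in>S. Bf u w * ind v w) = Bf u v"
    unfolding ind_def using v finS by (simp add: if_distrib cong: if_cong)
  finally show ?thesis .
qed

lemma bil_sig: "u \<in> S \<Longrightarrow> bil v (sig u f) = bil v f - 2 * bil u f * Bf v u"
  unfolding sig_def by (subst bil_lin) auto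

lemma sig_sig: "u \<in> S \<Longrightarrow> sig u (sig u f) = f"
  unfolding sig_def[of u "sig u f"] bil_sig
  by (simp add: Bf_self sig_def algebra_simps)


lemma act_span: assumes st: "s \<in> S" "t \<in> S" and w: "w \<in> lists {s,t}"
  shows "\<exists>\<alpha> \<beta>. act w f = (\<lambda>x. f x + \<alpha> * ind s x + \<beta> * ind t x)"
  using w
proof (induction w)
  case Nil show ?case by (rule exI[of _ 0], rule exI[of _ 0]) simp
next
  case (Cons a w)
  then obtain \<alpha> \<beta> where ab: "act w f = (\<lambda>x. f x + \<alpha> * ind s x + \<beta> * ind t x)" by auto
  define g where "g = act w f"
  have "a = s \<or> a = t" using Cons by auto
  then show ?case
  proof
    assume a: "a = s"
    show ?thesis
      by (rule exI[of _ "\<alpha> - 2 * bil a g"], rule exI[of _ \<beta>])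
         (auto simp: a sig_def g_def ab algebra_simps)
  next
    assume a: "a = t"
    show ?thesis
      by (rule exI[of _ \<alpha>], rule exI[of _ "\<beta> - 2 * bil a g"])
         (auto simp: a sig_def g_def ab algebra_simps)
  qed
qed

lemma alt_2Suc': "alt s t (2 * Suc j) = [s,t] @ alt s t (2*j)"
  by simp

lemma alt_2Suc: "alt s t (2 * Suc j) = alt s t (2*j) @ [s,t]"
  by (induction j) (auto simp: numeral_2_eq_2)

lemma act_rel_ne: assumes st: "s \<in> S" "t \<in> S" "s \<noteq> t" and mk: "m s t = enat k"
  shows "act (alt s t (2*k)) f = f"
proof -
  have k: "k \<ge> 2" using mge2[OF st] mk by (simp add: numeral_eq_enat)
  define c where "c = cos (pi / real k)"
  have Bst: "Bf s t = - c" "Bf t s = -c" unfolding Bf_def c_def using mk msym[OF st(1,2)] by simp_all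
  have Bss: "Bf s s = 1" "Bf t t = 1" using Bf_self st by auto
  have step: "(bil s (sig s (sig t g)), bil t (sig s (sig t g))) = Mf c (bil s g, bil t g)" for g
    unfolding Mf_def using st by (simp add: bil_sig Bst Bss algebra_simps)
  have pa: "(bil s (act (alt s t (2*j)) g), bil t (act (alt s t (2*j)) g)) = (Mf c ^^ j) (bil s g, bil t g)" for j g
  proof (induction j arbitrary: g)
    case 0 then show ?case by simp
  next
    case (Suc j)
    have "act (alt s t (2 * Suc j)) g = act (alt s t (2*j)) (sig s (sig t g))"
      unfolding alt_2Suc act_app by simp
    then show ?case using Suc step by (simp add: funpow_swap1)
  qed
  have alts: "alt s t (2*k) \<in> lists {s,t}" using set_alt[of s t "2*k"] by auto
  obtain \<alpha> \<beta> where ab: "act (alt s t (2*k)) f = (\<lambda>x. f x + \<alpha> * ind s x + \<beta> * ind t x)"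
    using act_span[OF st(1,2) alts] by blast
  have fix2: "(Mf c ^^ k) (bil s f, bil t f) = (bil s f, bil t f)" unfolding c_def using Mf_pow_id k by blast
  have bs: "bil s (\<lambda>x. f x + \<alpha> * ind s x + \<beta> * ind t x) = bil s f + \<alpha> - c * \<beta>"
    using bil_lin[OF st(2), of s "\<lambda>x. f x + \<alpha> * ind s x"] bil_lin[OF st(1), of s f] Bst Bss by simp
  have bt: "bil t (\<lambda>x. f x + \<alpha> * ind s x + \<beta> * ind t x) = bil t f - c * \<alpha> + \<beta>"
    using bil_lin[OF st(2), of t "\<lambda>x. f x + \<alpha> * ind s x"] bil_lin[OF st(1), of t f] Bst Bss by simp
  have pp: "(bil s (act (alt s t (2*k)) f), bil t (act (alt s t (2*k)) f)) = (bil s f, bil t f)"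
    using pa[of k f] fix2 by simp
  have e1: "\<alpha> = c * \<beta>" using pp unfolding ab bs by simp
  have e2: "\<beta> = c * \<alpha>" using pp unfolding ab bt by simp
  have pk1: "0 < pi / real k" using k by simp
  have pk2: "pi / real k \<le> pi / 2" using k by (intro divide_left_mono) auto
  have c0: "0 \<le> c" unfolding c_def using pk1 pk2
    by (intro cos_ge_zero) auto
  have c1: "c < 1" unfolding c_def using k
    using cos_monotone_0_pi[of 0 "pi / real k"] pk1 pk2 by auto
  have "\<alpha> = c * c * \<alpha>" using e1 e2 by simp
  moreover have "c * c < 1"
  proof -
    have "c * c \<le> c * 1" using c0 c1 by (intro mult_left_mono) auto
    then show ?thesis using c1 by simp
  qed
  ultimately have "\<alpha> * (1 - c * c) = 0" by (simp add: algebra_simps)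
  then have "\<alpha> = 0" using \<open>c * c < 1\<close> by simp
  then have "\<beta> = 0" using e2 by simp
  then show ?thesis using ab \<open>\<alpha> = 0\<close> by simp
qed

lemma act_rel: assumes st: "s \<in> S" "t \<in> S" and mk: "m s t = enat k"
  shows "act (alt s t (2*k)) f = f"
proof (cases "s = t")
  case True
  then have "k = 1" using mk mss st by (simp add: one_enat_def)
  then show ?thesis using True sig_sig st by (simp add: numeral_2_eq_2)
next
  case False then show ?thesis using act_rel_ne st mk by blast
qed

lemma ceq_act: "ceq u w \<Longrightarrow> act u = act w"
proof (induction rule: coxeter_eq.induct)
  case (rel s t k u v)
  show ?case by (rule ext) (simp add: act_app act_rel rel)
qed auto


lemma bil_two: assumes "c \<in> S" "d \<in> S"
  shows "bil u (\<lambda>x. a * ind c x + b * ind d x) = a * Bf u c + b * Bf u d"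
proof -
  have z: "bil u (\<lambda>x. 0) = 0" unfolding bil_def by simp
  have "bil u (\<lambda>x. (\<lambda>x. 0 + a * ind c x) x + b * ind d x) = bil u (\<lambda>x. 0 + a * ind c x) + b * Bf u d"
    by (rule bil_lin[OF assms(2)])
  moreover have "bil u (\<lambda>x. (\<lambda>x. 0) x + a * ind c x) = bil u (\<lambda>x. 0) + a * Bf u c"
    by (rule bil_lin[OF assms(1)])
  ultimately show ?thesis using z by simp
qed

lemma prim: assumes cd: "c \<in> S" "d \<in> S" "c \<noteq> d"
  shows "act (alt c d (2*j)) (ind c) =
    (\<lambda>x. fst ((Nf (- Bf c d) ^^ j) (1,0)) * ind c x + snd ((Nf (- Bf c d) ^^ j) (1,0)) * ind d x)"
proof (induction j)
  case 0
  show ?case by (rule ext) (simp add: ind_def)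
next
  case (Suc j)
  define c0 where "c0 = - Bf c d"
  obtain a b where ab: "(Nf c0 ^^ j) (1,0) = (a,b)" by force
  have Bcd: "Bf c d = - c0" "Bf d c = - c0" unfolding c0_def using Bf_sym cd by auto
  have Bcc: "Bf c c = 1" "Bf d d = 1" using Bf_self cd by auto
  have IH: "act (alt c d (2*j)) (ind c) = (\<lambda>x. a * ind c x + b * ind d x)"
    using Suc ab unfolding c0_def by simp
  have "act (alt c d (2*Suc j)) (ind c) = sig c (sig d (\<lambda>x. a * ind c x + b * ind d x))"
    unfolding alt_2Suc' act_app IH by simp
  also have "sig d (\<lambda>x. a * ind c x + b * ind d x) = (\<lambda>x. a * ind c x + (2*c0*a - b) * ind d x)"
    unfolding sig_def bil_two[OF cd(1,2)] Bcd Bcc by (rule ext) (simp add: algebra_simps)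
  also have "sig c (\<lambda>x. a * ind c x + (2*c0*a - b) * ind d x) =
     (\<lambda>x. (2*c0*(2*c0*a - b) - a) * ind c x + (2*c0*a - b) * ind d x)"
    unfolding sig_def bil_two[OF cd(1,2)] Bcd Bcc by (rule ext) (simp add: algebra_simps ind_def)
  finally have fin: "act (alt c d (2*Suc j)) (ind c) = (\<lambda>x. (2*c0*(2*c0*a - b) - a) * ind c x + (2*c0*a - b) * ind d x)" .
  have "(Nf c0 ^^ Suc j) (1,0) = (2*c0*(2*c0*a - b) - a, 2*c0*a - b)"
    using ab by (simp add: Nf_def)
  then show ?case using fin unfolding c0_def by simp
qed

lemma dihedral: assumes cd: "c \<in> S" "d \<in> S" "c \<noteq> d" and k: "k \<ge> 1"
  and e: "ceq (alt c d (2*k)) []"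
  shows "\<exists>M. m c d = enat M \<and> M \<le> k"
proof -
  have "act (alt c d (2*k)) (ind c) = ind c" using ceq_act[OF e] by simp
  then have h: "(\<lambda>x. fst ((Nf (- Bf c d) ^^ k) (1,0)) * ind c x + snd ((Nf (- Bf c d) ^^ k) (1,0)) * ind d x) = ind c"
    using prim[OF cd] by simp
  have h1: "fst ((Nf (- Bf c d) ^^ k) (1,0)) = 1" using fun_cong[OF h, of c] cd by (simp add: ind_def)
  have h2: "snd ((Nf (- Bf c d) ^^ k) (1,0)) = 0" using fun_cong[OF h, of d] cd by (simp add: ind_def)
  show ?thesis
  proof (cases "m c d")
    case infinity
    then have "Bf c d = -1" unfolding Bf_def by simp
    then show ?thesis using h1 k Nf_inf[of k] by simp
  next
    case (enat M)
    show ?thesis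
    proof (rule ccontr)
      assume "\<not> ?thesis"
      then have Mk: "k < M" using enat by auto
      define th where "th = pi / real M"
      have Bcd: "- Bf c d = cos th" unfolding Bf_def th_def enat by simp
      have th0: "0 < th" unfolding th_def using Mk by simp
      have thpi: "th < pi" unfolding th_def using Mk k by (simp add: field_simps)
      have sth: "sin th > 0" using th0 thpi by (intro sin_gt_zero) auto
      have Mth: "real M * th = pi" unfolding th_def using Mk by simp
      have "sin ((2*real k)*th) / sin th = 0" using h2 Nf_fin[of th k] sth unfolding Bcd by simp
      then have s0: "sin ((2*real k)*th) = 0" using sth by simp
      have "sin ((2*real k)*th - pi) = 0" using s0 by (simp add: sin_diff)
      moreover have "- pi < (2*real k)*th - pi" using th0 k by simp
      moreover have "(2*real k)*th - pi < pi"
      proof -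
        have "real k * th < real M * th" using Mk th0 by simp
        then show ?thesis using Mth by simp
      qed
      ultimately have "(2*real k)*th - pi = 0" using sin_eq_0_pi by blast
      then have e2: "(2*real k + 1)*th = pi + th" by (simp add: algebra_simps)
      have "sin ((2*real k+1)*th) / sin th = 1" using h1 Nf_fin[of th k] sth unfolding Bcd by simp
      then show False using sth unfolding e2 by (simp add: sin_add)
    qed
  qed
qed

end


lemma alt_odd_snoc: "alt c d (2*i+1) @ [d] = alt c d (2*(Suc i))"
proof -
  have "alt c d (2*i+1 + 1) = alt c d (2*i+1) @ (if even (2*i+1) then alt c d 1 else alt d c 1)"
    by (rule alt_add)
  then show ?thesis by simp
qed

lemma no_adj_alt: assumes st: "s \<noteq> t"
  shows "a \<in> lists {s,t} \<longrightarrow> (\<forall>p q y. a \<noteq> p @ [y,y] @ q) \<longrightarrow> a = alt s t (length a) \<or> a = alt t s (length a)"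
proof (induction a)
  case Nil then show ?case by simp
next
  case (Cons x a)
  show ?case
  proof (intro impI)
    assume l: "x # a \<in> lists {s,t}" and na: "\<forall>p q y. x # a \<noteq> p @ [y,y] @ q"
    have na': "\<forall>p q y. a \<noteq> p @ [y,y] @ q" using na by (metis append_Cons)
    have IH: "a = alt s t (length a) \<or> a = alt t s (length a)" using Cons.IH l na' by auto
    show "x # a = alt s t (length (x # a)) \<or> x # a = alt t s (length (x # a))"
    proof (cases a)
      case Nil then show ?thesis using l by auto
    next
      case (Cons y a')
      have "x \<noteq> y" using na Cons by (metis append_Nil append_Cons)
      then show ?thesis using IH Cons l st by (cases "length a") auto
    qed
  qed
qed

context cox begin

lemma alt_shorten: assumes cd: "c \<in> S" "d \<in> S" and mk: "m c d = enat M"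
  shows "ceq (alt c d (Suc M)) (alt d c (M - 1))"
proof -
  have M: "M \<ge> 1"
  proof (cases "c = d")
    case True then show ?thesis using mss cd mk by (simp add: one_enat_def)
  next
    case False then show ?thesis using mge2[OF cd False] mk by (simp add: numeral_eq_enat)
  qed
  have l: "alt c d M = c # alt d c (M-1)" using M by (cases M) auto
  have "ceq ([c] @ alt d c M @ []) ([c] @ alt c d M @ [])"
    using ceq_braid[of d c M] cd mk msym by (intro ceq_cong) auto
  then have 1: "ceq (alt c d (Suc M)) ([c,c] @ alt d c (M-1))" unfolding l by simp
  have 2: "ceq ([] @ [c,c] @ alt d c (M-1)) ([] @ [] @ alt d c (M-1))"
    by (rule ceq_cong[OF ceq_ss]) (use cd alt_lists in auto)
  show ?thesis using ceq_trans[OF 1] 2 by simp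
qed

lemma two_desc: assumes x: "reduced S m x" and st: "s \<in> S" "t \<in> S" "s \<noteq> t"
  and i: "i < length x" "ceq (tr x i) [s]" and j: "j < length x" "ceq (tr x j) [t]"
  shows "\<exists>M z. m s t = enat M \<and> ceq x (alt s t M @ z) \<and> M + length z = length x"
proof -
  have xl: "x \<in> lists S" using reduced_lists x by auto
  define C where "C = {z. \<exists>a \<in> lists {s,t}. ceq x (a@z)}"
  have "x \<in> C" unfolding C_def using ceq_refl[OF xl] by (intro CollectI bexI[of _ "[]"]) auto
  then obtain z0 where z0C: "z0 \<in> C" and z0min: "\<And>z. z \<in> C \<Longrightarrow> length z0 \<le> length z"
    using ex_has_least_nat[of "\<lambda>z. z \<in> C" x length] by blast
  define A where "A = {a \<in> lists {s,t}. ceq x (a@z0)}"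
  obtain a1 where "a1 \<in> A" using z0C unfolding C_def A_def by blast
  then obtain a0 where a0A: "a0 \<in> A" and a0min: "\<And>a. a \<in> A \<Longrightarrow> length a0 \<le> length a"
    using ex_has_least_nat[of "\<lambda>a. a \<in> A" a1 length] by blast
  have a0st: "a0 \<in> lists {s,t}" and xa0: "ceq x (a0@z0)" using a0A unfolding A_def by auto
  have az: "a0 \<in> lists S" "z0 \<in> lists S" using ceq_lists[OF xa0] by auto
  have inC: "z \<in> C" if "a \<in> lists {s,t}" "ceq x (a@z)" for a z unfolding C_def using that by blast
  have inA: "a \<in> A" if "a \<in> lists {s,t}" "ceq x (a@z0)" for a unfolding A_def using that by blast
  have red: "reduced S m (a0@z0)"
  proof (rule distinct_reduced)
    show "a0 @ z0 \<in> lists S" using az by simp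
  next
    fix i j assume ij: "i < j" "j < length (a0@z0)"
    show "\<not> ceq (tr (a0@z0) i) (tr (a0@z0) j)"
    proof
    assume e: "ceq (tr (a0@z0) i) (tr (a0@z0) j)"
    have x': "ceq x (del (del (a0@z0) j) i)"
      using ceq_trans[OF xa0 D2[OF _ ij e]] az by simp
    consider "j < length a0" | "i < length a0" "length a0 \<le> j" | "length a0 \<le> i" using ij by linarith
    then show False
    proof cases
      case 1
      have dl: "length (del a0 j) = length a0 - 1" using 1 del_length by blast
      have "del (del (a0@z0) j) i = del (del a0 j) i @ z0"
        using 1 ij dl by (simp add: del_app less_diff_conv)
      moreover have "del (del a0 j) i \<in> lists {s,t}" using a0st del_lists del_set
        by (meson in_lists_conv_set subsetD)
      ultimately have "del (del a0 j) i \<in> A" using inA x' by simp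
      then have "length a0 \<le> length (del (del a0 j) i)" using a0min by blast
      then show False using 1 ij dl del_length[of i "del a0 j"] by simp
    next
      case 2
      have "del (del (a0@z0) j) i = del a0 i @ del z0 (j - length a0)"
        using 2 by (simp add: del_app)
      moreover have "del a0 i \<in> lists {s,t}" using a0st del_set by (meson in_lists_conv_set subsetD)
      ultimately have "del z0 (j - length a0) \<in> C" using inC x' by simp
      then have "length z0 \<le> length (del z0 (j - length a0))" using z0min by blast
      then show False using 2 ij del_length[of "j - length a0" z0] by simp
    next
      case 3
      have jj: "j - length a0 < length z0" using ij 3 by simp
      have dl: "length (del z0 (j - length a0)) = length z0 - 1" using jj del_length by blast
      have "del (del (a0@z0) j) i = a0 @ del (del z0 (j - length a0)) (i - length a0)"
        using 3 ij by (simp add: del_app)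
      then have "del (del z0 (j - length a0)) (i - length a0) \<in> C" using inC[OF a0st] x' by simp
      then have "length z0 \<le> length (del (del z0 (j - length a0)) (i - length a0))" using z0min by blast
      then show False using 3 ij dl jj del_length[of "i - length a0" "del z0 (j - length a0)"] by simp
    qed
    qed
  qed
  have len: "length a0 + length z0 = length x" using reduced_len_eq[OF x red xa0] by simp
  have desc: "\<exists>i'<length a0. ceq (tr a0 i') [r]" if r: "r \<in> {s,t}" and
    ex: "\<exists>i<length x. ceq (tr x i) [r]" for r
  proof -
    obtain i where i: "i < length x" "ceq (tr x i) [r]" using ex by blast
    obtain j' where j': "j' < length (a0@z0)" "ceq (tr (a0@z0) j') [r]"
      using desc_transfer[OF x xa0 i] by blast
    show ?thesis
    proof (cases "j' < length a0")
      case True then show ?thesis using j' tr_app1 by metis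
    next
      case False
      define i'' where "i'' = j' - length a0"
      have jj: "j' = length a0 + i''" "i'' < length z0" using False j' unfolding i''_def by auto
      have "ceq (a0 @ tr z0 i'' @ rev a0) [r]" using j' tr_app2 jj by metis
      then have tz: "ceq (tr z0 i'') (rev a0 @ [r] @ a0)" using conj_iff az by blast
      have "ceq z0 (tr z0 i'' @ del z0 i'')" using D1' az jj by blast
      moreover have "ceq (tr z0 i'' @ del z0 i'') ((rev a0 @ [r] @ a0) @ del z0 i'')"
        using ceq_congR[OF tz] del_lists az by blast
      ultimately have "ceq (a0 @ z0) (a0 @ (rev a0 @ [r] @ a0) @ del z0 i'')"
        using ceq_congL az ceq_trans by blast
      then have "ceq x ((a0 @ rev a0 @ [r] @ a0) @ del z0 i'')" using xa0 ceq_trans by simp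
      moreover have "a0 @ rev a0 @ [r] @ a0 \<in> lists {s,t}" using a0st r by auto
      ultimately have "del z0 i'' \<in> C" using inC by blast
      then show ?thesis using z0min[of "del z0 i''"] del_length[of i'' z0] jj by simp
    qed
  qed
  have ds: "\<exists>i'<length a0. ceq (tr a0 i') [s]" using desc i by blast
  have dt: "\<exists>i'<length a0. ceq (tr a0 i') [t]" using desc j by blast
  have na: "a0 \<noteq> p @ [y,y] @ q" for p q y
  proof
    assume a: "a0 = p @ [y,y] @ q"
    have y: "y \<in> S" "p \<in> lists S" "q \<in> lists S" using az a by auto
    have h: "ceq (p @ [y,y] @ (q@z0)) (p @ [] @ (q@z0))" using ceq_cong[OF ceq_ss[OF y(1)] y(2)] y az by simp
    have "ceq x ((p@q)@z0)" using ceq_trans[OF xa0] h a by simp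
    moreover have "p@q \<in> lists {s,t}" using a a0st by auto
    ultimately have "length a0 \<le> length (p@q)" using a0min inA by blast
    then show False using a by simp
  qed
  have na': "\<forall>p q y. a0 \<noteq> p @ [y,y] @ q" using na by blast
  have alt2: "a0 = alt s t (length a0) \<or> a0 = alt t s (length a0)"
    using no_adj_alt[OF st(3)] a0st na' by blast
  obtain c d where cd: "(c = s \<and> d = t) \<or> (c = t \<and> d = s)" and a0cd: "a0 = alt c d (length a0)"
  proof (cases "a0 = alt s t (length a0)")
    case True then show ?thesis using that by blast
  next
    case False then show ?thesis using that alt2 by blast
  qed
  have cdS: "c \<in> S" "d \<in> S" "c \<noteq> d" using cd st by auto
  have "\<exists>j'<length a0. ceq (tr a0 j') [d]"
  proof (cases "d = t")
    case True then show ?thesis using dt by simp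
  next
    case False then have "d = s" using cd by auto
    then show ?thesis using ds by simp
  qed
  then obtain j' where j': "j' < length a0" "ceq (tr a0 j') [d]" by blast
  have "tr a0 j' = alt c d (2*j'+1)" using tr_alt j'(1) a0cd by metis
  then have h1: "ceq (alt c d (2*j'+1) @ [d]) ([d] @ [d])" using ceq_congR[of "tr a0 j'" "[d]" "[d]"] j' cdS by simp
  have "ceq (alt c d (2*j'+1) @ [d]) []" using ceq_trans[OF h1] ceq_ss[OF cdS(2)] by simp
  then have "ceq (alt c d (2*Suc j')) []" unfolding alt_odd_snoc .
  then have "\<exists>M. m c d = enat M \<and> M \<le> Suc j'" using dihedral[OF cdS, of "Suc j'"] by simp
  then obtain M where M: "m c d = enat M" "M \<le> Suc j'" by blast
  have nM: "length a0 = M"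
  proof (rule ccontr)
    assume "length a0 \<noteq> M"
    then have gt: "length a0 \<ge> Suc M" using M j' by simp
    define n where "n = length a0"
    define rest where "rest = (if even (Suc M) then alt c d (n - Suc M) else alt d c (n - Suc M))"
    have eq: "Suc M + (n - Suc M) = n" using gt unfolding n_def by simp
    have "a0 = alt c d (Suc M + (n - Suc M))" unfolding eq using a0cd n_def by simp
    also have "\<dots> = alt c d (Suc M) @ rest" unfolding rest_def by (rule alt_add)
    finally have a0r: "a0 = alt c d (Suc M) @ rest" .
    have rl: "rest \<in> lists S" using alt_lists cdS unfolding rest_def by auto
    have "ceq (alt c d (Suc M) @ rest @ z0) (alt d c (M - 1) @ rest @ z0)"
      using ceq_congR[OF alt_shorten[OF cdS(1,2) M(1)]] rl az by simp
    then have "ceq x ((alt d c (M - 1) @ rest) @ z0)" using xa0 a0r ceq_trans by simp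
    moreover have "alt d c (M - 1) @ rest \<in> lists {s,t}"
      using set_alt[of d c] set_alt[of c d] cd unfolding rest_def by auto
    ultimately have "length a0 \<le> length (alt d c (M - 1) @ rest)" using a0min inA by blast
    moreover have "length rest = n - Suc M" unfolding rest_def by simp
    ultimately show False using gt unfolding n_def by simp
  qed
  show ?thesis
  proof (cases "c = s")
    case True
    then have "d = t" using cd st by auto
    then show ?thesis using True M nM len xa0 a0cd by metis
  next
    case False
    then have cs: "c = t" "d = s" using cd by auto
    have "m s t = enat M" using M cs msym st by simp
    moreover have "ceq x (alt s t M @ z0)"
    proof -
      have "ceq (alt t s M @ z0) (alt s t M @ z0)" using ceq_congR[OF ceq_braid[of t s M]] st M cs az by simp
      then show ?thesis using xa0 a0cd nM cs ceq_trans by metis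
    qed
    ultimately show ?thesis using nM len by metis
  qed
qed

end


context cox begin

definition braid_step :: "'a list \<Rightarrow> 'a list \<Rightarrow> bool" where
  "braid_step x y \<longleftrightarrow> (\<exists>p q s t M. s \<in> S \<and> t \<in> S \<and> s \<noteq> t \<and> m s t = enat M \<and>
     p \<in> lists S \<and> q \<in> lists S \<and> x = p @ alt s t M @ q \<and> y = p @ alt t s M @ q)"

definition beq :: "'a list \<Rightarrow> 'a list \<Rightarrow> bool" where
  "beq = braid_step\<^sup>*\<^sup>*"

lemma beq_refl[simp]: "beq x x" unfolding beq_def by simp

lemma beq_trans: "beq x y \<Longrightarrow> beq y z \<Longrightarrow> beq x z" unfolding beq_def by simp

lemma braid_step_sym: "braid_step x y \<Longrightarrow> braid_step y x"
  unfolding braid_step_def by (metis msym)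

lemma beq_sym: "beq x y \<Longrightarrow> beq y x"
  unfolding beq_def
proof (induction rule: rtranclp_induct)
  case base then show ?case by simp
next
  case (step y z) then show ?case
    by (meson braid_step_sym converse_rtranclp_into_rtranclp)
qed

lemma braid_step_cong: "braid_step x y \<Longrightarrow> u \<in> lists S \<Longrightarrow> v \<in> lists S \<Longrightarrow> braid_step (u@x@v) (u@y@v)"
  unfolding braid_step_def
proof (elim exE conjE)
  fix p q s t M
  assume h: "s \<in> S" "t \<in> S" "s \<noteq> t" "m s t = enat M" "p \<in> lists S" "q \<in> lists S"
    "x = p @ alt s t M @ q" "y = p @ alt t s M @ q" and uv: "u \<in> lists S" "v \<in> lists S"
  show "\<exists>p q s t M. s \<in> S \<and> t \<in> S \<and> s \<noteq> t \<and> m s t = enat M \<and> p \<in> lists S \<and> q \<in> lists S \<and>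
       u @ x @ v = p @ alt s t M @ q \<and> u @ y @ v = p @ alt t s M @ q"
    by (rule exI[of _ "u@p"], rule exI[of _ "q@v"], rule exI[of _ s], rule exI[of _ t], rule exI[of _ M])
       (use h uv in auto)
qed

lemma beq_cong: "beq x y \<Longrightarrow> u \<in> lists S \<Longrightarrow> v \<in> lists S \<Longrightarrow> beq (u@x@v) (u@y@v)"
  unfolding beq_def
proof (induction rule: rtranclp_induct)
  case base then show ?case by simp
next
  case (step y z) then show ?case
    by (meson braid_step_cong rtranclp.rtrancl_into_rtrancl)
qed

lemma braid_step_ceq: "braid_step x y \<Longrightarrow> ceq x y"
  unfolding braid_step_def using ceq_cong ceq_braid by fastforce

lemma beq_ceq: "beq x y \<Longrightarrow> x \<in> lists S \<Longrightarrow> ceq x y"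
  unfolding beq_def
proof (induction rule: rtranclp_induct)
  case base then show ?case by (simp add: ceq_refl)
next
  case (step y z) then show ?case using braid_step_ceq ceq_trans by blast
qed

lemma tr0: "tr (a#w) 0 = [a]" unfolding tr_def by simp

lemma matsumoto: "reduced S m u \<Longrightarrow> reduced S m w \<Longrightarrow> ceq u w \<Longrightarrow> beq u w"
proof (induction "length u" arbitrary: u w rule: less_induct)
  case less
  have same: "beq (a#x) (a#y)" if "reduced S m (a#x)" "reduced S m (a#y)" "ceq (a#x) (a#y)"
      "length (a#x) = length u" for a x y
  proof -
    have a: "a \<in> S" using reduced_lists[OF that(1)] by simp
    have "ceq x y" using ceq_cancelL[of "[a]" x y] that a by simp
    moreover have "reduced S m x" "reduced S m y" using reduced_suffix[of "[a]"] that by auto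
    ultimately have "beq x y" using less.hyps[of x y] that by simp
    then show ?thesis using beq_cong[of x y "[a]" "[]"] a by simp
  qed
  show ?case
  proof (cases u)
    case Nil
    then have "w = []" using reduced_len_eq[OF less.prems] by simp
    then show ?thesis using Nil by simp
  next
    case (Cons s u')
    have "length w = length u" using reduced_len_eq less.prems by simp
    then obtain t w' where w: "w = t # w'" using Cons by (cases w) auto
    show ?thesis
    proof (cases "s = t")
      case True then show ?thesis using same less.prems Cons w by simp
    next
      case False
      have uS: "u \<in> lists S" "w \<in> lists S" using reduced_lists less.prems by auto
      have st: "s \<in> S" "t \<in> S" using uS Cons w by auto
      have ds: "ceq (tr u 0) [s]" using tr0 Cons ceq_refl st by simp
      have "ceq (tr w 0) [t]" using tr0 w ceq_refl st by simp
      then obtain j where j: "j < length u" "ceq (tr u j) [t]"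
        using desc_transfer[OF less.prems(2) ceq_sym[OF less.prems(3)], of 0] w by auto
      obtain M z where Mz: "m s t = enat M" "ceq u (alt s t M @ z)" "M + length z = length u"
        using two_desc[OF less.prems(1) st False _ ds j] Cons by auto
      have M2: "M \<ge> 2" using mge2[OF st False] Mz by (simp add: numeral_eq_enat)
      have zl: "z \<in> lists S" using ceq_lists[OF Mz(2)] by auto
      define v1 where "v1 = alt s t M @ z"
      define v2 where "v2 = alt t s M @ z"
      have v12: "ceq v1 v2" unfolding v1_def v2_def using ceq_congR[OF ceq_braid[OF st Mz(1)] zl] .
      have r1: "reduced S m v1" using reduced_sameclass[OF less.prems(1) Mz(2)] Mz(3) v1_def by simp
      have r2: "reduced S m v2" using reduced_sameclass[OF r1 v12] v1_def v2_def by simp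
      have b12: "beq v1 v2" unfolding v1_def v2_def beq_def braid_step_def
        using st False Mz(1) zl by (intro r_into_rtranclp exI[of _ "[]"] exI[of _ z]) auto
      obtain v1' where v1': "v1 = s # v1'" unfolding v1_def using M2 by (cases M) auto
      obtain v2' where v2': "v2 = t # v2'" unfolding v2_def using M2 by (cases M) auto
      have lv: "length v1 = length u" "length v2 = length u" using Mz(3) v1_def v2_def by simp_all
      have "beq u v1" using same[of s u' v1'] less.prems(1) r1 Mz(2) Cons v1' v1_def lv by simp
      moreover have "beq v2 w"
      proof -
        have "ceq v2 w" using ceq_trans[OF ceq_sym[OF v12] ceq_trans[OF ceq_sym[OF Mz(2)[folded v1_def]] less.prems(3)]] .
        then show ?thesis using same[of t v2' w'] r2 less.prems(2) w v2' lv by simp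
      qed
      ultimately show ?thesis using b12 beq_trans by blast
    qed
  qed
qed

lemma tits: assumes w: "w \<in> lists S" and nr: "\<not> reduced S m w"
  shows "\<exists>p q b. b \<in> S \<and> beq w (p @ [b,b] @ q)"
proof -
  have "\<not> reduced S m (take (length w) w)" using nr by simp
  then obtain n0 where n0: "\<not> reduced S m (take n0 w)" and n0min: "\<And>n. \<not> reduced S m (take n w) \<Longrightarrow> n0 \<le> n"
    using ex_has_least_nat[of "\<lambda>n. \<not> reduced S m (take n w)" "length w" id] by auto
  have "n0 \<noteq> 0" using n0 reduced_Nil by (cases n0) auto
  have n0w: "n0 \<le> length w"
  proof (rule ccontr)
    assume "\<not> n0 \<le> length w"
    then show False using n0min[of "length w"] nr by simp
  qed
  define P where "P = take (n0 - 1) w"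
  define b where "b = w ! (n0 - 1)"
  define rest where "rest = drop n0 w"
  have wd: "w = P @ [b] @ rest" unfolding P_def b_def rest_def
    using id_take_nth_drop[of "n0-1" w] \<open>n0 \<noteq> 0\<close> n0w by simp
  have Pb: "take n0 w = P @ [b]" unfolding P_def b_def using \<open>n0 \<noteq> 0\<close> n0w
    by (metis Suc_pred' bot_nat_0.not_eq_extremum le_less_trans lessI take_Suc_conv_app_nth less_le_not_le le_eq_less_or_eq)
  have Pr: "reduced S m P"
  proof (rule ccontr)
    assume "\<not> reduced S m P"
    then have "n0 \<le> n0 - 1" using n0min P_def by blast
    then show False using \<open>n0 \<noteq> 0\<close> by simp
  qed
  have lS: "P \<in> lists S" "b \<in> S" "rest \<in> lists S" using w wd by auto
  have nPb: "\<not> reduced S m (P @ [b])" using n0 Pb by simp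
  then obtain i j where ij: "i < j" "j < length (P@[b])" "ceq (tr (P@[b]) i) (tr (P@[b]) j)"
    using distinct_reduced[of "P@[b]"] lS by auto
  have jP: "j = length P"
  proof (rule ccontr)
    assume "j \<noteq> length P"
    then have "j < length P" using ij by simp
    then show False using reduced_distinct[OF Pr ij(1)] ij tr_app1 by (metis order.strict_trans)
  qed
  have "del (del (P@[b]) j) i = del P i" unfolding jP by (simp add: del_def)
  then have c1: "ceq (P@[b]) (del P i)" using D2[of "P@[b]" i j] ij lS by simp
  have "ceq ((P@[b])@[b]) (del P i @ [b])" using ceq_congR[OF c1] lS by simp
  moreover have "ceq (P @ [b,b] @ []) (P @ [] @ [])" using ceq_cong[OF ceq_ss[OF lS(2)] lS(1), of "[]"] by simp
  ultimately have cP: "ceq P (del P i @ [b])" by (metis append.assoc append_Cons append_Nil append_Nil2 ceq_sym ceq_trans)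
  have iP: "i < length P" using ij jP by simp
  have "reduced S m (del P i @ [b])" using reduced_sameclass[OF Pr cP] del_length[OF iP] iP by simp
  then have "beq P (del P i @ [b])" using matsumoto Pr cP by blast
  then have "beq ([] @ P @ ([b] @ rest)) ([] @ (del P i @ [b]) @ ([b] @ rest))"
    using lS by (intro beq_cong) auto
  then show ?thesis using wd lS by (intro exI[of _ "del P i"] exI[of _ rest] exI[of _ b]) auto
qed

end


lemma filter_alt: "set (alt s t n) \<subseteq> A \<Longrightarrow> filter (\<lambda>a. a \<in> A) (alt s t n) = alt s t n"
  by (simp add: subset_code(1))

context cox begin

definition bad :: "'a list \<Rightarrow> bool" where
  "bad g \<longleftrightarrow> (\<exists>s\<in>S. g = [s,s]) \<or> (\<exists>s\<in>S. \<exists>t\<in>S. s \<noteq> t \<and> (\<exists>M. m s t = enat M \<and> M \<ge> 3 \<and> g = alt s t M))"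

definition Lgood :: "'a list \<Rightarrow> bool" where
  "Lgood w \<longleftrightarrow> w \<in> lists S \<and> (\<forall>x g y. comm_eq m w (x@g@y) \<longrightarrow> \<not> bad g)"

lemma comm_step_lists: "comm_step m x y \<Longrightarrow> x \<in> lists S \<Longrightarrow> y \<in> lists S"
  unfolding comm_step_def by auto

lemma comm_eq_lists: "comm_eq m x y \<Longrightarrow> x \<in> lists S \<Longrightarrow> y \<in> lists S"
  unfolding comm_eq_def by (induction rule: rtranclp_induct) (auto simp: comm_step_lists)

lemma comm_step_sym: "comm_step m x y \<Longrightarrow> x \<in> lists S \<Longrightarrow> comm_step m y x"
  unfolding comm_step_def
proof (elim exE conjE)
  fix u v s t assume h: "m s t = 2" "x = u @ [s, t] @ v" "y = u @ [t, s] @ v" "x \<in> lists S"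
  then have "m t s = 2" using msym by auto
  then show "\<exists>u v s t. m s t = 2 \<and> y = u @ [s, t] @ v \<and> x = u @ [t, s] @ v" using h by blast
qed

lemma comm_eq_sym: "comm_eq m x y \<Longrightarrow> x \<in> lists S \<Longrightarrow> comm_eq m y x"
  unfolding comm_eq_def
proof (induction rule: rtranclp_induct)
  case base then show ?case by simp
next
  case (step y z)
  have "y \<in> lists S" using comm_eq_lists step unfolding comm_eq_def by blast
  then have "comm_step m z y" using comm_step_sym step by blast
  then show ?case using step by (meson converse_rtranclp_into_rtranclp)
qed

lemma comm_eq_trans: "comm_eq m x y \<Longrightarrow> comm_eq m y z \<Longrightarrow> comm_eq m x z"
  unfolding comm_eq_def by simp

lemma comm_step_beq: "comm_step m x y \<Longrightarrow> x \<in> lists S \<Longrightarrow> braid_step x y"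
  unfolding comm_step_def braid_step_def
proof (elim exE conjE)
  fix u v s t assume h: "m s t = 2" "x = u @ [s, t] @ v" "y = u @ [t, s] @ v" "x \<in> lists S"
  have st: "s \<in> S" "t \<in> S" "u \<in> lists S" "v \<in> lists S" using h by auto
  have "s \<noteq> t" using h(1) mss st by (auto simp: one_enat_def numeral_eq_enat)
  moreover have "m s t = enat 2" using h(1) by (simp add: numeral_eq_enat)
  ultimately show "\<exists>p q s t M. s \<in> S \<and> t \<in> S \<and> s \<noteq> t \<and> m s t = enat M \<and> p \<in> lists S \<and> q \<in> lists S \<and>
      x = p @ alt s t M @ q \<and> y = p @ alt t s M @ q"
    using h st by (intro exI[of _ u] exI[of _ v] exI[of _ s] exI[of _ t] exI[of _ 2]) (auto simp: numeral_2_eq_2)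
qed

lemma comm_eq_beq: "comm_eq m x y \<Longrightarrow> x \<in> lists S \<Longrightarrow> beq x y"
  unfolding comm_eq_def
proof (induction rule: rtranclp_induct)
  case base then show ?case by simp
next
  case (step y z)
  have "y \<in> lists S" using comm_eq_lists step unfolding comm_eq_def by blast
  then have "braid_step y z" using comm_step_beq step by blast
  then show ?case using step unfolding beq_def by (meson rtranclp.rtrancl_into_rtrancl)
qed

lemma comm_eq_ceq: "comm_eq m x y \<Longrightarrow> x \<in> lists S \<Longrightarrow> ceq x y"
  using comm_eq_beq beq_ceq by blast

lemma comm_eq_length: "comm_eq m x y \<Longrightarrow> length x = length y"
  unfolding comm_eq_def comm_step_def by (induction rule: rtranclp_induct) auto

lemma good_beq: assumes g: "Lgood w" and b: "beq w v" shows "comm_eq m w v"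
  using b unfolding beq_def
proof (induction rule: rtranclp_induct)
  case base then show ?case by (simp add: comm_eq_def)
next
  case (step y z)
  from step(2) obtain p q s t M where h: "s \<in> S" "t \<in> S" "s \<noteq> t" "m s t = enat M"
    "p \<in> lists S" "q \<in> lists S" "y = p @ alt s t M @ q" "z = p @ alt t s M @ q"
    unfolding braid_step_def by blast
  have M2: "M \<ge> 2" using mge2[OF h(1,2,3)] h(4) by (simp add: numeral_eq_enat)
  show ?case
  proof (cases "M = 2")
    case True
    have "comm_step m y z" unfolding comm_step_def using h True
      by (intro exI[of _ p] exI[of _ q] exI[of _ s] exI[of _ t]) (auto simp: numeral_2_eq_2 numeral_eq_enat)
    then show ?thesis using step(3) unfolding comm_eq_def by (meson rtranclp.rtrancl_into_rtrancl)
  next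
    case False
    have "\<exists>s'\<in>S. \<exists>t'\<in>S. s' \<noteq> t' \<and> (\<exists>M'. m s' t' = enat M' \<and> M' \<ge> 3 \<and> alt s t M = alt s' t' M')"
      using h M2 False by (intro bexI[of _ s] bexI[of _ t] conjI exI[of _ M]) auto
    then have "bad (alt s t M)" unfolding bad_def by blast
    then show ?thesis using g step(3) h unfolding Lgood_def by blast
  qed
qed

lemma good_FC: assumes g: "Lgood w" shows "w \<in> FC_reduced_words S m"
proof -
  have wl: "w \<in> lists S" using g Lgood_def by auto
  have red: "reduced S m w"
  proof (rule ccontr)
    assume "\<not> reduced S m w"
    then obtain p q b where "b \<in> S" "beq w (p @ [b,b] @ q)" using tits wl by blast
    then have "comm_eq m w (p @ [b,b] @ q)" "bad [b,b]" using good_beq g bad_def by auto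
    then show False using g Lgood_def by blast
  qed
  have "comm_eq m u w" if "reduced S m u" "ceq u w" for u
  proof -
    have "beq w u" using matsumoto[OF red that(1) ceq_sym[OF that(2)]] .
    then have "comm_eq m w u" using good_beq g by blast
    then show ?thesis using comm_eq_sym wl by blast
  qed
  then show ?thesis unfolding FC_reduced_words_def using red by blast
qed

lemma comm_eq_filter: assumes st: "s \<in> S" "t \<in> S" "s \<noteq> t" "m s t \<noteq> 2"
  and c: "comm_eq m x y" and x: "x \<in> lists S"
  shows "filter (\<lambda>a. a \<in> {s,t}) x = filter (\<lambda>a. a \<in> {s,t}) y"
  using c x unfolding comm_eq_def
proof (induction rule: rtranclp_induct)
  case base then show ?case by simp
next
  case (step y z)
  have yl: "y \<in> lists S" using comm_eq_lists step unfolding comm_eq_def by blast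
  from step(2) obtain u v c d where h: "m c d = 2" "y = u @ [c, d] @ v" "z = u @ [d, c] @ v"
    unfolding comm_step_def by blast
  have cd: "c \<in> S" "d \<in> S" using yl h by auto
  have "c \<noteq> d" using h(1) mss cd by (auto simp: one_enat_def numeral_eq_enat)
  have "\<not> (c \<in> {s,t} \<and> d \<in> {s,t})"
  proof
    assume "c \<in> {s,t} \<and> d \<in> {s,t}"
    then have "m c d = m s t" using \<open>c \<noteq> d\<close> msym st by auto
    then show False using h st by simp
  qed
  then have "filter (\<lambda>a. a \<in> {s,t}) [c,d] = filter (\<lambda>a. a \<in> {s,t}) [d,c]" by auto
  then have fe: "filter (\<lambda>a. a \<in> {s,t}) (u @ [c,d] @ v) = filter (\<lambda>a. a \<in> {s,t}) (u @ [d,c] @ v)"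
    by (simp only: filter_append)
  have "filter (\<lambda>a. a \<in> {s,t}) y = filter (\<lambda>a. a \<in> {s,t}) z" unfolding h(2,3) by (rule fe)
  then show ?case using step.IH step.prems by simp
qed

lemma FC_good: assumes w: "w \<in> FC_reduced_words S m" shows "Lgood w"
proof -
  have red: "reduced S m w" and fc: "\<And>u. reduced S m u \<Longrightarrow> ceq u w \<Longrightarrow> comm_eq m u w"
    using w unfolding FC_reduced_words_def by auto
  have wl: "w \<in> lists S" using red reduced_lists by auto
  have "\<not> bad g" if c: "comm_eq m w (x@g@y)" for x g y
  proof
    assume bg: "bad g"
    let ?v = "x@g@y"
    have vl: "?v \<in> lists S" using comm_eq_lists c wl by blast
    have cv: "ceq w ?v" using comm_eq_ceq c wl by blast
    have rv: "reduced S m ?v" using reduced_sameclass[OF red cv] comm_eq_length[OF c] by simp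
    show False using bg unfolding bad_def
    proof (elim disjE bexE exE conjE)
      fix b assume b: "b \<in> S" "g = [b,b]"
      have "ceq (x@[b,b]@y) (x@[]@y)" using ceq_cong[OF ceq_ss[OF b(1)]] vl by simp
      then have "ceq (x@y) ?v" using b(2) ceq_sym by simp
      then have "length ?v \<le> length (x@y)" using rv unfolding reduced_def by blast
      then show False using b(2) by simp
    next
      fix s t M assume h: "s \<in> S" "t \<in> S" "s \<noteq> t" "m s t = enat M" "3 \<le> M" "g = alt s t M"
      let ?u = "x @ alt t s M @ y"
      have cu: "ceq ?v ?u" using ceq_cong[OF ceq_braid[OF h(1,2,4)]] vl h by simp
      have ru: "reduced S m ?u" using reduced_sameclass[OF rv cu] h(6) by simp
      have "comm_eq m ?u w" using fc[OF ru] cv cu ceq_sym ceq_trans by blast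
      then have cuv: "comm_eq m ?u ?v" using c comm_eq_trans by blast
      have m2: "m s t \<noteq> 2" using h by (simp add: numeral_eq_enat)
      have ul: "?u \<in> lists S" using ceq_lists[OF cu] by auto
      have "filter (\<lambda>a. a \<in> {s,t}) ?u = filter (\<lambda>a. a \<in> {s,t}) ?v"
        using comm_eq_filter[OF h(1,2,3) m2 cuv ul] .
      moreover have f1: "filter (\<lambda>a. a \<in> {s,t}) (alt s t M) = alt s t M"
        using filter_alt[of s t M "{s,t}"] set_alt[of s t M] by blast
      moreover have f2: "filter (\<lambda>a. a \<in> {s,t}) (alt t s M) = alt t s M"
        using filter_alt[of t s M "{s,t}"] set_alt[of t s M] by blast
      ultimately have "filter (\<lambda>a. a \<in> {s,t}) x @ alt t s M @ filter (\<lambda>a. a \<in> {s,t}) y =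
          filter (\<lambda>a. a \<in> {s,t}) x @ alt s t M @ filter (\<lambda>a. a \<in> {s,t}) y"
        unfolding filter_append h(6) by simp
      then have "alt t s M = alt s t M" by simp
      moreover obtain M' where "M = Suc M'" using h(5) by (cases M) auto
      ultimately show False using h(3) by simp
    qed
  qed
  then show ?thesis unfolding Lgood_def using wl by blast
qed

lemma FC_eq: "FC_reduced_words S m = {w. Lgood w}"
  using FC_good good_FC by blast

end


lemma split4: "x0 @ a # y0 = u @ s # t # z \<Longrightarrow>
  (\<exists>x1. x0 = u @ s # t # x1 \<and> z = x1 @ a # y0) \<or>
  (x0 = u @ [s] \<and> t = a \<and> z = y0) \<or>
  (x0 = u \<and> s = a \<and> y0 = t # z) \<or>
  (\<exists>y1. u = x0 @ a # y1 \<and> y0 = y1 @ s # t # z)"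
proof (induction u arbitrary: x0)
  case Nil
  then show ?case
  proof (cases x0)
    case Nil then show ?thesis using Nil.prems by simp
  next
    case (Cons c x0')
    then show ?thesis using Nil.prems by (cases x0') auto
  qed
next
  case (Cons e u')
  then show ?case
  proof (cases x0)
    case Nil then show ?thesis using Cons.prems by auto
  next
    case (Cons c x0')
    then have "x0' @ a # y0 = u' @ s # t # z" "c = e" using Cons.prems by auto
    then show ?thesis using Cons.IH[of x0'] Cons by auto
  qed
qed

lemma split3: "x @ g @ y = x0 @ a # y0 \<Longrightarrow>
  (\<exists>x2. x = x0 @ a # x2 \<and> y0 = x2 @ g @ y) \<or>
  (\<exists>g1 g2. g = g1 @ a # g2 \<and> x0 = x @ g1 \<and> y0 = g2 @ y) \<or>
  (\<exists>y1 y2. y = y1 @ a # y2 \<and> x0 = x @ g @ y1 \<and> y0 = y2)"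
proof -
  assume h: "x @ g @ y = x0 @ a # y0"
  then obtain us where us: "(x = x0 @ us \<and> us @ g @ y = a # y0) \<or> (x @ us = x0 \<and> g @ y = us @ a # y0)"
    using append_eq_append_conv2[of x "g@y" x0 "a#y0"] by auto
  then show ?thesis
  proof
    assume h1: "x = x0 @ us \<and> us @ g @ y = a # y0"
    show ?thesis
    proof (cases us)
      case Nil
      then have gy: "g @ y = a # y0" "x = x0" using h1 by auto
      show ?thesis
      proof (cases g)
        case Nil then show ?thesis using gy by auto
      next
        case (Cons c g') then show ?thesis using gy
          by (intro disjI2 disjI1 exI[of _ "[]"] exI[of _ g']) auto
      qed
    next
      case (Cons c us') then show ?thesis using h1 by auto
    qed
  next
    assume h2: "x @ us = x0 \<and> g @ y = us @ a # y0"
    then obtain vs where vs: "(g = us @ vs \<and> vs @ y = a # y0) \<or> (g @ vs = us \<and> y = vs @ a # y0)"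
      using append_eq_append_conv2[of g y us "a#y0"] by auto
    then show ?thesis
    proof
      assume h3: "g = us @ vs \<and> vs @ y = a # y0"
      show ?thesis
      proof (cases vs)
        case Nil then show ?thesis using h2 h3
          by (intro disjI2 exI[of _ "[]"] exI[of _ y0]) auto
      next
        case (Cons c vs') then show ?thesis using h2 h3
          by (intro disjI2 disjI1 exI[of _ us] exI[of _ vs']) auto
      qed
    next
      assume h3: "g @ vs = us \<and> y = vs @ a # y0"
      then show ?thesis using h2 by (intro disjI2 exI[of _ vs] exI[of _ y0]) auto
    qed
  qed
qed

lemma alt_adj: "alt s t n = p @ [a,b] @ q \<Longrightarrow> (a = s \<and> b = t) \<or> (a = t \<and> b = s)"
proof (induction n arbitrary: s t p)
  case 0 then show ?case by simp
next
  case (Suc n)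
  show ?case
  proof (cases p)
    case Nil
    then show ?thesis using Suc.prems by (cases n) auto
  next
    case (Cons c p')
    then have "alt t s n = p' @ [a,b] @ q" using Suc.prems by auto
    then show ?thesis using Suc.IH by blast
  qed
qed

context cox begin

lemma comm_step_cong: "comm_step m u v \<Longrightarrow> comm_step m (p@u@q) (p@v@q)"
  unfolding comm_step_def by (metis append.assoc)

lemma comm_eq_cong: "comm_eq m u v \<Longrightarrow> comm_eq m (p@u@q) (p@v@q)"
  unfolding comm_eq_def
proof (induction rule: rtranclp_induct)
  case base then show ?case by simp
next
  case (step y z) then show ?case by (meson comm_step_cong rtranclp.rtrancl_into_rtrancl)
qed

lemma comm_eq_refl: "comm_eq m u u" unfolding comm_eq_def by simp

lemma move_left: "(\<forall>b\<in>set y. m b a = 2) \<Longrightarrow> comm_eq m (p @ y @ [a]) (p @ [a] @ y)"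
proof (induction y arbitrary: p)
  case Nil then show ?case by (simp add: comm_eq_refl)
next
  case (Cons b y)
  have 1: "comm_eq m ((p@[b]) @ y @ [a]) ((p@[b]) @ [a] @ y)" using Cons.IH[of "p@[b]"] Cons.prems by simp
  have "comm_step m (p @ [b,a] @ y) (p @ [a,b] @ y)" unfolding comm_step_def using Cons.prems by auto
  then have 2: "comm_eq m (p @ [b,a] @ y) (p @ [a,b] @ y)" unfolding comm_eq_def by simp
  show ?case using comm_eq_trans[OF 1] 2 by simp
qed

lemma comm_snoc: assumes "comm_eq m (w@[a]) v" "w@[a] \<in> lists S"
  shows "\<exists>x0 y0. v = x0 @ [a] @ y0 \<and> comm_eq m w (x0@y0) \<and> (\<forall>b\<in>set y0. m a b = 2)"
  using assms unfolding comm_eq_def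
proof (induction rule: rtranclp_induct)
  case base then show ?case by (intro exI[of _ w] exI[of _ "[]"]) simp
next
  case (step v v')
  obtain x0 y0 where h: "v = x0 @ [a] @ y0" "(comm_step m)\<^sup>*\<^sup>* w (x0@y0)" "\<forall>b\<in>set y0. m a b = 2"
    using step.IH step.prems by blast
  have vl: "v \<in> lists S" using comm_eq_lists[of "w@[a]" v] step unfolding comm_eq_def by blast
  obtain u s t z where st: "m s t = 2" "v = u @ [s,t] @ z" "v' = u @ [t,s] @ z"
    using step(2) unfolding comm_step_def by blast
  have aS: "a \<in> S" using vl unfolding h(1) by simp
  have sS: "s \<in> S" "t \<in> S" "a \<in> S" using vl st aS by auto
  have eq: "x0 @ a # y0 = u @ s # t # z" using h(1) st(2) by simp
  consider (c1) x1 where "x0 = u @ s # t # x1" "z = x1 @ a # y0"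
    | (c2) "x0 = u @ [s]" "t = a" "z = y0"
    | (c3) "x0 = u" "s = a" "y0 = t # z"
    | (c4) y1 where "u = x0 @ a # y1" "y0 = y1 @ s # t # z"
    using split4[OF eq] by blast
  then show ?case
  proof cases
    case c1
    have "comm_step m (x0@y0) ((u @ [t,s] @ x1) @ y0)" unfolding comm_step_def using c1 st by auto
    then show ?thesis using h c1 st
      by (intro exI[of _ "u @ [t,s] @ x1"] exI[of _ y0]) auto
  next
    case c2
    have "m a s = 2" using st c2 msym sS by auto
    then show ?thesis using h c2 st by (intro exI[of _ u] exI[of _ "s # y0"]) auto
  next
    case c3
    then show ?thesis using h st by (intro exI[of _ "u @ [t]"] exI[of _ z]) auto
  next
    case c4
    have "comm_step m (x0@y0) (x0 @ y1 @ [t,s] @ z)" unfolding comm_step_def using c4 st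
      by (intro exI[of _ "x0@y1"] exI[of _ z] exI[of _ s] exI[of _ t]) auto
    then show ?thesis using h c4 st
      by (intro exI[of _ x0] exI[of _ "y1 @ [t,s] @ z"]) auto
  qed
qed

end


context cox begin

definition Pset :: "'a list set" where "Pset = {g. \<exists>h. bad (g@h)}"

definition Rw :: "'a list \<Rightarrow> ('a list \<times> 'a set) set" where
  "Rw w = {(g, Y). g \<in> Pset \<and> (\<exists>x y. comm_eq m w (x@g@y) \<and> set y = Y)}"

definition stepR :: "('a list \<times> 'a set) set \<Rightarrow> 'a \<Rightarrow> ('a list \<times> 'a set) set" where
  "stepR Rs a = {(g@[a], Y) | g Y. (g,Y) \<in> Rs \<and> (\<forall>b\<in>Y. m a b = 2) \<and> g@[a] \<in> Pset}
     \<union> {(g, insert a Y) | g Y. (g,Y) \<in> Rs}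
     \<union> {p \<in> Rs. \<forall>b \<in> set (fst p) \<union> snd p. m a b = 2}"

lemma stepR_I1: "(g,Y) \<in> Rs \<Longrightarrow> \<forall>b\<in>Y. m a b = 2 \<Longrightarrow> g@[a] \<in> Pset \<Longrightarrow> (g@[a],Y) \<in> stepR Rs a"
  unfolding stepR_def by blast
lemma stepR_I2: "(g,Y) \<in> Rs \<Longrightarrow> (g, insert a Y) \<in> stepR Rs a"
  unfolding stepR_def by blast
lemma stepR_I3: "(g,Y) \<in> Rs \<Longrightarrow> \<forall>b\<in>set g \<union> Y. m a b = 2 \<Longrightarrow> (g,Y) \<in> stepR Rs a"
  unfolding stepR_def by auto

lemma bad_adj: assumes "bad h" "h = p @ [a,b] @ q" shows "m a b \<noteq> 2"
  using assms(1) unfolding bad_def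
proof (elim disjE bexE exE conjE)
  fix s assume s: "s \<in> S" "h = [s,s]"
  then have "a = s" "b = s" using assms(2) by (cases p; auto)+
  then show ?thesis using mss s by (simp add: one_enat_def numeral_eq_enat)
next
  fix s t M assume h: "s \<in> S" "t \<in> S" "s \<noteq> t" "m s t = enat M" "3 \<le> M" "h = alt s t M"
  then have "(a = s \<and> b = t) \<or> (a = t \<and> b = s)" using alt_adj assms(2) by metis
  then have "m a b = enat M" using h msym by auto
  then show ?thesis using h(5) by (simp add: numeral_eq_enat)
qed

lemma Rw_snoc: assumes wa: "w @ [a] \<in> lists S" shows "Rw (w@[a]) = stepR (Rw w) a"
proof
  have wl: "w \<in> lists S" and aS: "a \<in> S" using wa by auto
  show "Rw (w@[a]) \<subseteq> stepR (Rw w) a"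
  proof
    fix p assume pR: "p \<in> Rw (w@[a])"
    obtain g Y where pg: "p = (g,Y)" by force
    have "g \<in> Pset \<and> (\<exists>x y. comm_eq m (w@[a]) (x@g@y) \<and> set y = Y)" using pR unfolding pg Rw_def by simp
    then obtain x y where p: "p = (g,Y)" "g \<in> Pset" "comm_eq m (w@[a]) (x@g@y)" "set y = Y"
      using pg by blast
    obtain x0 y0 where d: "x@g@y = x0 @ [a] @ y0" "comm_eq m w (x0@y0)" "\<forall>b\<in>set y0. m a b = 2"
      using comm_snoc[OF p(3) wa] by blast
    have eq: "x@g@y = x0 @ a # y0" using d(1) by simp
    consider (c1) x2 where "x = x0 @ a # x2" "y0 = x2 @ g @ y"
      | (c2) g1 g2 where "g = g1 @ a # g2" "x0 = x @ g1" "y0 = g2 @ y"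
      | (c3) y1 y2 where "y = y1 @ a # y2" "x0 = x @ g @ y1" "y0 = y2"
      using split3[OF eq] by blast
    then show "p \<in> stepR (Rw w) a"
    proof cases
      case c1
      have "comm_eq m w ((x0@x2)@g@y)" using d c1 by simp
      then have "(g,Y) \<in> Rw w" unfolding Rw_def using p by blast
      moreover have "\<forall>b \<in> set g \<union> Y. m a b = 2" using d(3) c1 p by auto
      ultimately show ?thesis using p stepR_I3 by simp
    next
      case c2
      have g2: "g2 = []"
      proof (rule ccontr)
        assume "g2 \<noteq> []"
        then obtain b g3 where g3: "g2 = b # g3" by (cases g2) auto
        then have "m a b = 2" using d(3) c2 by auto
        moreover obtain h where "bad (g@h)" using p(2) unfolding Pset_def by blast
        moreover have "g @ h = g1 @ [a,b] @ (g3 @ h)" using c2 g3 by simp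
        ultimately show False using bad_adj by blast
      qed
      obtain h where "bad (g@h)" using p(2) unfolding Pset_def by blast
      then have "bad (g1 @ ([a] @ h))" using c2 g2 by simp
      then have g1P: "g1 \<in> Pset" unfolding Pset_def by blast
      have "comm_eq m w (x@g1@y)" using d c2 g2 by simp
      then have "(g1,Y) \<in> Rw w" unfolding Rw_def using p g1P by blast
      moreover have "\<forall>b\<in>Y. m a b = 2" using d(3) c2 g2 p by auto
      moreover have "g = g1@[a]" using c2 g2 by simp
      ultimately show ?thesis using p stepR_I1 by simp
    next
      case c3
      have "comm_eq m w (x@g@(y1@y2))" using d c3 by simp
      then have "(g, set (y1@y2)) \<in> Rw w" unfolding Rw_def using p by blast
      moreover have "Y = insert a (set (y1@y2))" using p c3 by auto
      ultimately show ?thesis using p stepR_I2 by simp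
    qed
  qed
next
  have wl: "w \<in> lists S" and aS: "a \<in> S" using wa by auto
  show "stepR (Rw w) a \<subseteq> Rw (w@[a])"
  proof
    fix p assume "p \<in> stepR (Rw w) a"
    then consider (s1) g Y where "p = (g@[a], Y)" "(g,Y) \<in> Rw w" "\<forall>b\<in>Y. m a b = 2" "g@[a] \<in> Pset"
      | (s2) g Y where "p = (g, insert a Y)" "(g,Y) \<in> Rw w"
      | (s3) "p \<in> Rw w" "\<forall>b \<in> set (fst p) \<union> snd p. m a b = 2"
      unfolding stepR_def by blast
    then show "p \<in> Rw (w@[a])"
    proof cases
      case s1
      then obtain x y where xy: "comm_eq m w (x@g@y)" "set y = Y" unfolding Rw_def by blast
      have yl: "x@g@y \<in> lists S" using comm_eq_lists xy(1) wl by blast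
      have 1: "comm_eq m (w@[a]) ((x@g@y)@[a])" using comm_eq_cong[OF xy(1), of "[]" "[a]"] by simp
      have "\<forall>b\<in>set y. m b a = 2"
      proof
        fix b assume b: "b \<in> set y"
        then have "b \<in> S" using yl by auto
        moreover have "m a b = 2" using s1 xy b by auto
        ultimately show "m b a = 2" using msym aS by metis
      qed
      then have 2: "comm_eq m ((x@g) @ y @ [a]) ((x@g) @ [a] @ y)" by (rule move_left)
      have "comm_eq m (w@[a]) (x@(g@[a])@y)" using comm_eq_trans[OF 1] 2 by simp
      then show ?thesis unfolding Rw_def using s1 xy by blast
    next
      case s2
      then obtain x y where xy: "comm_eq m w (x@g@y)" "set y = Y" and gP: "g \<in> Pset" unfolding Rw_def by blast
      have "comm_eq m (w@[a]) (x@g@(y@[a]))" using comm_eq_cong[OF xy(1), of "[]" "[a]"] by simp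
      then show ?thesis unfolding Rw_def using s2 xy gP by fastforce
    next
      case s3
      obtain g Y where gY: "p = (g,Y)" by force
      then obtain x y where xy: "comm_eq m w (x@g@y)" "set y = Y" and gP: "g \<in> Pset"
        using s3 unfolding Rw_def by blast
      have yl: "x@g@y \<in> lists S" using comm_eq_lists xy(1) wl by blast
      have 1: "comm_eq m (w@[a]) (x@(g@y)@[a])" using comm_eq_cong[OF xy(1), of "[]" "[a]"] by simp
      have "\<forall>b\<in>set (g@y). m b a = 2"
      proof
        fix b assume b: "b \<in> set (g@y)"
        then have "b \<in> S" using yl by auto
        moreover have "m a b = 2" using s3 gY xy b by auto
        ultimately show "m b a = 2" using msym aS by metis
      qed
      then have 2: "comm_eq m (x @ (g@y) @ [a]) (x @ [a] @ (g@y))" by (rule move_left)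
      have "comm_eq m (w@[a]) ((x@[a])@g@y)" using comm_eq_trans[OF 1] 2 by simp
      then show ?thesis unfolding Rw_def using gY xy gP by blast
    qed
  qed
qed

lemma Lgood_Rw: "Lgood w \<longleftrightarrow> w \<in> lists S \<and> (\<forall>p\<in>Rw w. \<not> bad (fst p))"
proof
  assume g: "Lgood w"
  have "\<not> bad (fst p)" if p: "p \<in> Rw w" for p
  proof -
    obtain gg Y where pg: "p = (gg,Y)" by force
    then obtain x y where "comm_eq m w (x@gg@y)" using p unfolding Rw_def by blast
    then show ?thesis using g pg unfolding Lgood_def by auto
  qed
  then show "w \<in> lists S \<and> (\<forall>p\<in>Rw w. \<not> bad (fst p))" using g unfolding Lgood_def by blast
next
  assume h: "w \<in> lists S \<and> (\<forall>p\<in>Rw w. \<not> bad (fst p))"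
  have "\<not> bad g" if "comm_eq m w (x@g@y)" for x g y
  proof
    assume b: "bad g"
    then have "bad (g @ [])" by simp
    then have "g \<in> Pset" unfolding Pset_def by blast
    then have "(g, set y) \<in> Rw w" unfolding Rw_def using that by blast
    then show False using h b by auto
  qed
  then show "Lgood w" unfolding Lgood_def using h by blast
qed

lemma finite_bad: "finite {g. bad g}"
proof -
  have "{g. bad g} \<subseteq> (\<lambda>s. [s,s]) ` S \<union> (\<lambda>p. alt (fst p) (snd p) (the_enat (m (fst p) (snd p)))) ` (S \<times> S)"
  proof
    fix g assume "g \<in> {g. bad g}"
    then show "g \<in> (\<lambda>s. [s,s]) ` S \<union> (\<lambda>p. alt (fst p) (snd p) (the_enat (m (fst p) (snd p)))) ` (S \<times> S)"
      unfolding bad_def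
    proof (elim CollectE disjE bexE exE conjE)
      fix s assume "s \<in> S" "g = [s,s]" then show ?thesis by blast
    next
      fix s t M assume h: "s \<in> S" "t \<in> S" "m s t = enat M" "g = alt s t M"
      then have "g = (\<lambda>p. alt (fst p) (snd p) (the_enat (m (fst p) (snd p)))) (s,t)" by simp
      then show ?thesis using h by blast
    qed
  qed
  moreover have "finite ((\<lambda>s. [s,s]) ` S \<union> (\<lambda>p. alt (fst p) (snd p) (the_enat (m (fst p) (snd p)))) ` (S \<times> S))"
    using finS by simp
  ultimately show ?thesis by (rule finite_subset)
qed

lemma finite_Pset: "finite Pset"
proof -
  have "Pset \<subseteq> (\<Union>b\<in>{g. bad g}. (\<lambda>n. take n b) ` {..length b})"
  proof
    fix g assume "g \<in> Pset"
    then obtain h where h: "bad (g@h)" unfolding Pset_def by blast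
    then have "g = take (length g) (g@h)" "length g \<le> length (g@h)" by simp_all
    then show "g \<in> (\<Union>b\<in>{g. bad g}. (\<lambda>n. take n b) ` {..length b})" using h by blast
  qed
  moreover have "finite (\<Union>b\<in>{g. bad g}. (\<lambda>n. take n b) ` {..length b})"
    using finite_bad by auto
  ultimately show ?thesis by (rule finite_subset)
qed

definition Dset :: "('a list \<times> 'a set) set set" where "Dset = Pow (Pset \<times> Pow S)"

lemma finite_Dset: "finite Dset"
  unfolding Dset_def using finite_Pset finS by simp

lemma Rw_D: "w \<in> lists S \<Longrightarrow> Rw w \<in> Dset"
  unfolding Dset_def Rw_def using comm_eq_lists by fastforce

lemma stepR_D: "Rs \<in> Dset \<Longrightarrow> a \<in> S \<Longrightarrow> stepR Rs a \<in> Dset"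
  unfolding Dset_def stepR_def by auto

end

theorem theorem3p5:
  fixes S :: "'a set" and m :: "'a \<Rightarrow> 'a \<Rightarrow> enat"
  assumes "coxeter_matrix S m"
  shows "regular_lang S (FC_reduced_words S m)"
proof -
  interpret cox S m by (rule cox.intro[OF assms])
  obtain enc :: "('a list \<times> 'a set) set \<Rightarrow> nat" and n where enc: "enc ` Dset = {i. i < n}" "inj_on enc Dset"
    using finite_imp_inj_to_nat_seg[OF finite_Dset] by blast
  define dec where "dec q = the_inv_into Dset enc q" for q
  have dec_enc: "dec (enc Rs) = Rs" if "Rs \<in> Dset" for Rs
    unfolding dec_def using the_inv_into_f_f[OF enc(2) that] .
  define Q where "Q = enc ` Dset"
  define q0 where "q0 = enc (Rw [])"
  define \<delta> where "\<delta> q a = enc (stepR (dec q) a)" for q a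
  define G where "G = {Rs \<in> Dset. \<forall>p\<in>Rs. \<not> bad (fst p)}"
  define F where "F = enc ` G"
  have fold: "foldl \<delta> q0 w = enc (Rw w)" if "w \<in> lists S" for w
    using that
  proof (induction w rule: rev_induct)
    case Nil then show ?case unfolding q0_def by simp
  next
    case (snoc a w)
    have wl: "w \<in> lists S" using snoc.prems by simp
    have "foldl \<delta> q0 (w@[a]) = \<delta> (enc (Rw w)) a" using snoc wl by simp
    also have "\<dots> = enc (stepR (Rw w) a)" unfolding \<delta>_def using dec_enc Rw_D wl by simp
    also have "\<dots> = enc (Rw (w@[a]))" using Rw_snoc snoc.prems by simp
    finally show ?case .
  qed
  have "finite Q" unfolding Q_def using finite_Dset by simp
  moreover have "q0 \<in> Q" unfolding Q_def q0_def using Rw_D by simp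
  moreover have "F \<subseteq> Q" unfolding F_def Q_def G_def by auto
  moreover have "\<forall>q\<in>Q. \<forall>a\<in>S. \<delta> q a \<in> Q"
    unfolding Q_def \<delta>_def using dec_enc stepR_D by auto
  moreover have "FC_reduced_words S m = {w \<in> lists S. foldl \<delta> q0 w \<in> F}"
  proof -
    have "Lgood w \<longleftrightarrow> w \<in> lists S \<and> foldl \<delta> q0 w \<in> F" for w
    proof (cases "w \<in> lists S")
      case True
      have "foldl \<delta> q0 w \<in> F \<longleftrightarrow> Rw w \<in> G"
        unfolding fold[OF True] F_def using inj_on_image_mem_iff[OF enc(2) Rw_D[OF True]] G_def by auto
      also have "\<dots> \<longleftrightarrow> (\<forall>p\<in>Rw w. \<not> bad (fst p))" unfolding G_def using Rw_D True by auto
      finally show ?thesis using Lgood_Rw True by simp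
    next
      case False then show ?thesis using Lgood_Rw by simp
    qed
    then show ?thesis using FC_eq by auto
  qed
  ultimately show ?thesis unfolding regular_lang_def
    by (intro exI[of _ Q] exI[of _ q0] exI[of _ \<delta>] exI[of _ F]) simp
qed


end
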